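(* For a plane forest $\overline{\mathcal F}$ with $n$ vertices, let $\iota(\overline{\mathcal F})$ be the ordered forest obtained by numbering its vertices $1,\dots,n$ in order of first visit in a left depth-first (preorder) traversal of the trees from left to right. Then the linear map $\iota:\mathbf H_{NCK}\to\mathbf H_o$ is an injective morphism of Hopf algebras (equivalently, $\overline{\mathcal F}\mapsto S^{\iota(\overline{\mathcal F})}$ is a Hopf embedding of $\mathbf H_{NCK}$ into the polynomial realization of $\mathbf H_o$).
   Context: A plane forest is a finite sequence of plane trees (rooted trees in which the children of each vertex are linearly ordered). The noncommutative Connes–Kreimer algebra $\mathbf H_{NCK}$ has basis the plane forests, product = concatenation of sequences, and coproduct $\Delta(\overline{\mathcal F})=\sum_V\mathrm{Roo}_V\overline{\mathcal F}\otimes\mathrm{Lea}_V\overline{\mathcal F}$ over admissible cuts $V$ (sets of vertices no two of which are in ancestor/descendant relation), where $\mathrm{Lea}_V$ is the plane subforest formed by $V$ and its descendants and $\mathrm{Roo}_V$ the plane subforest formed by the remaining vertices, with inherited planar orders. An ordered forest on $n$ vertices is a rooted forest with vertex set $[n]$ (labels unrelated to the structure); $\mathbf H_o$ has basis the ordered forests, product $\mathcal F\mathcal G$ = disjoint union with labels of $\mathcal G$ shifted by the number of vertices of $\mathcal F$, and coproduct $\Delta(\mathcal F)=\sum_V\mathrm{Roo}_V\mathcal F\otimes\mathrm{Lea}_V\mathcal F$ over admissible cuts, where $\mathrm{Lea}_V\mathcal F$ (resp. $\mathrm{Roo}_V\mathcal F$) is the induced subforest on $V$ and its descendants (resp. on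 the complement), relabelled by the increasing bijection onto $[k]$. $S^{\mathcal F}$ denotes the polynomial realization of $\mathcal F$ (sum of $\mathcal F$-compatible words over $\{a_{ij}:0\le i<j\}$ with $a_{ij}\prec a_{kl}$ iff $j=k$, compatibility meaning $w_k\prec w_l$ whenever $k$ is the parent of $l$). *)

theory Defs
  imports Main "HOL-Library.Multiset"
begin

datatype ptree = PNode "ptree list"

type_synonym pforest = "ptree list"

text \<open>Vertices of a plane forest are addressed by paths: i # p is the vertex with
tree-path p in the i-th tree (0-based); in a tree, [] is the root and j # p is the
vertex with path p in the j-th subtree.\<close>

fun shiftp :: "nat list \<Rightarrow> nat list" where
  "shiftp [] = []"
| "shiftp (i # q) = Suc i # q"

fun verts_t :: "ptree \<Rightarrow> nat list set"
and verts_f :: "pforest \<Rightarrow> nat list set" where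
  "verts_t (PNode cs) = insert [] (verts_f cs)"
| "verts_f [] = {}"
| "verts_f (t # ts) = Cons 0 ` verts_t t \<union> shiftp ` verts_f ts"

text \<open>Sub-cut selectors: paths of V inside the first tree, and the remaining paths shifted.\<close>
definition first_part :: "nat list set \<Rightarrow> nat list set" where
  "first_part V = {p. 0 # p \<in> V}"
definition rest_part :: "nat list set \<Rightarrow> nat list set" where
  "rest_part V = {i # p | i p. Suc i # p \<in> V}"

text \<open>Lea_V: plane subforest formed by V and its descendants (inherited planar order).\<close>
fun lea_t :: "nat list set \<Rightarrow> ptree \<Rightarrow> pforest"
and lea_f :: "nat list set \<Rightarrow> pforest \<Rightarrow> pforest" where
  "lea_t V (PNode cs) = (if [] \<in> V then [PNode cs] else lea_f V cs)"
| "lea_f V [] = []"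
| "lea_f V (t # ts) = lea_t (first_part V) t @ lea_f (rest_part V) ts"

text \<open>Roo_V: plane subforest formed by the remaining vertices (inherited planar order).\<close>
fun roo_t :: "nat list set \<Rightarrow> ptree \<Rightarrow> pforest"
and roo_f :: "nat list set \<Rightarrow> pforest \<Rightarrow> pforest" where
  "roo_t V (PNode cs) = (if [] \<in> V then [] else [PNode (roo_f V cs)])"
| "roo_f V [] = []"
| "roo_f V (t # ts) = roo_t (first_part V) t @ roo_f (rest_part V) ts"

text \<open>Admissible cuts: sets of vertices no two of which are in ancestor/descendant
relation (ancestor = strict prefix of the path).\<close>
definition padm_cuts :: "pforest \<Rightarrow> nat list set set" where
  "padm_cuts F = {V. V \<subseteq> verts_f F \<and>
      (\<forall>u\<in>V. \<forall>v\<in>V. u \<noteq> v \<longrightarrow> \<not> (\<exists>w. v = u @ w))}"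

definition pcop :: "pforest \<Rightarrow> (pforest \<times> pforest) multiset" where
  "pcop F = image_mset (\<lambda>V. (roo_f V F, lea_f V F)) (mset_set (padm_cuts F))"

text \<open>An ordered forest on n vertices: vertex set {1..n}, parent function
(None = root).\<close>
type_synonym oforest = "nat \<times> (nat \<Rightarrow> nat option)"

definition parent_rel :: "(nat \<Rightarrow> nat option) \<Rightarrow> (nat \<times> nat) set" where
  "parent_rel par = {(j, i). par i = Some j}"

definition wf_oforest :: "oforest \<Rightarrow> bool" where
  "wf_oforest F = (case F of (n, par) \<Rightarrow>
      (\<forall>i. par i \<noteq> None \<longrightarrow> i \<in> {1..n} \<and> the (par i) \<in> {1..n})
      \<and> wf (parent_rel par))"

definition oprod :: "oforest \<Rightarrow> oforest \<Rightarrow> oforest" where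
  "oprod F G = (case F of (n, p) \<Rightarrow> case G of (m, q) \<Rightarrow>
     (n + m, \<lambda>i. if i \<le> n then p i else map_option (\<lambda>a. a + n) (q (i - n))))"

definition oempty :: oforest where
  "oempty = (0, \<lambda>_. None)"

text \<open>Induced subforest on W, relabelled by the increasing bijection W \<rightarrow> {1..card W}.\<close>
definition orestrict :: "nat set \<Rightarrow> oforest \<Rightarrow> oforest" where
  "orestrict W F = (case F of (n, p) \<Rightarrow>
     (let k = card W; s = sorted_list_of_set W;
          rank = (\<lambda>x. card {y\<in>W. y \<le> x}) in
      (k, \<lambda>j. if j \<in> {1..k} then
                (case p (s ! (j - 1)) of
                   None \<Rightarrow> None
                 | Some a \<Rightarrow> if a \<in> W then Some (rank a) else None)
              else None)))"

definition oadm_cuts :: "oforest \<Rightarrow> nat set set" where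
  "oadm_cuts F = (case F of (n, p) \<Rightarrow>
     {V. V \<subseteq> {1..n} \<and> (\<forall>u\<in>V. \<forall>v\<in>V. (u, v) \<notin> (parent_rel p)\<^sup>+)})"

definition olea_set :: "oforest \<Rightarrow> nat set \<Rightarrow> nat set" where
  "olea_set F V = (case F of (n, p) \<Rightarrow>
     {x\<in>{1..n}. \<exists>v\<in>V. (v, x) \<in> (parent_rel p)\<^sup>*})"

definition ocop :: "oforest \<Rightarrow> (oforest \<times> oforest) multiset" where
  "ocop F = image_mset
     (\<lambda>V. (orestrict ({1..fst F} - olea_set F V) F, orestrict (olea_set F V) F))
     (mset_set (oadm_cuts F))"

text \<open>List of parents (in preorder) of the vertices, numbered from off+1 on,
with par the label of the parent of the top-level roots.\<close>
fun pre_t :: "nat \<Rightarrow> nat option \<Rightarrow> ptree \<Rightarrow> nat option list"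
and pre_f :: "nat \<Rightarrow> nat option \<Rightarrow> pforest \<Rightarrow> nat option list" where
  "pre_t off par (PNode cs) = par # pre_f (Suc off) (Some (Suc off)) cs"
| "pre_f off par [] = []"
| "pre_f off par (t # ts) =
     pre_t off par t @ pre_f (off + length (pre_t off par t)) par ts"

definition iota :: "pforest \<Rightarrow> oforest" where
  "iota F = (let L = pre_f 0 None F in
     (length L, \<lambda>i. if 1 \<le> i \<and> i \<le> length L then L ! (i - 1) else None))"

text \<open>Elements of the free module over a basis 'b: finitely supported coefficient
functions. The tensor square of the free module on 'b is identified with the free
module on 'b \<times> 'b.\<close>
definition fsupp :: "('b \<Rightarrow> 'k::zero) \<Rightarrow> 'b set" where
  "fsupp x = {b. x b \<noteq> 0}"

definition free_mod :: "('b \<Rightarrow> 'k::zero) set" where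
  "free_mod = {x. finite (fsupp x)}"

definition lin_ext :: "('b \<Rightarrow> 'c) \<Rightarrow> ('b \<Rightarrow> 'k::comm_ring_1) \<Rightarrow> 'c \<Rightarrow> 'k" where
  "lin_ext g x = (\<lambda>c. \<Sum>b\<in>{b\<in>fsupp x. g b = c}. x b)"

definition bilin_ext :: "('b \<Rightarrow> 'b \<Rightarrow> 'b) \<Rightarrow> ('b \<Rightarrow> 'k::comm_ring_1) \<Rightarrow> ('b \<Rightarrow> 'k) \<Rightarrow> 'b \<Rightarrow> 'k" where
  "bilin_ext m x y = (\<lambda>c. \<Sum>(a, b)\<in>{(a, b). a \<in> fsupp x \<and> b \<in> fsupp y \<and> m a b = c}. x a * y b)"

text \<open>Linear extension of a coproduct given on basis elements by a multiset of
pairs of basis elements (all coefficients 1, with multiplicity).\<close>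
definition cop_ext :: "('b \<Rightarrow> ('b \<times> 'b) multiset) \<Rightarrow> ('b \<Rightarrow> 'k::comm_ring_1) \<Rightarrow> 'b \<times> 'b \<Rightarrow> 'k" where
  "cop_ext D x = (\<lambda>pq. \<Sum>b\<in>fsupp x. x b * of_nat (count (D b) pq))"

definition basis_vec :: "'b \<Rightarrow> 'b \<Rightarrow> 'k::comm_ring_1" where
  "basis_vec b = (\<lambda>c. if c = b then 1 else 0)"

definition H_NCK :: "(pforest \<Rightarrow> 'k::field) set" where
  "H_NCK = free_mod"
definition mult_NCK :: "(pforest \<Rightarrow> 'k::field) \<Rightarrow> (pforest \<Rightarrow> 'k) \<Rightarrow> pforest \<Rightarrow> 'k" where
  "mult_NCK = bilin_ext (@)"
definition unit_NCK :: "pforest \<Rightarrow> 'k::field" where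
  "unit_NCK = basis_vec []"
definition cop_NCK :: "(pforest \<Rightarrow> 'k::field) \<Rightarrow> pforest \<times> pforest \<Rightarrow> 'k" where
  "cop_NCK = cop_ext pcop"
definition counit_NCK :: "(pforest \<Rightarrow> 'k::field) \<Rightarrow> 'k" where
  "counit_NCK x = x []"

definition H_o :: "(oforest \<Rightarrow> 'k::field) set" where
  "H_o = {x\<in>free_mod. \<forall>F\<in>fsupp x. wf_oforest F}"
definition mult_o :: "(oforest \<Rightarrow> 'k::field) \<Rightarrow> (oforest \<Rightarrow> 'k) \<Rightarrow> oforest \<Rightarrow> 'k" where
  "mult_o = bilin_ext oprod"
definition unit_o :: "oforest \<Rightarrow> 'k::field" where
  "unit_o = basis_vec oempty"
definition cop_o :: "(oforest \<Rightarrow> 'k::field) \<Rightarrow> oforest \<times> oforest \<Rightarrow> 'k" where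
  "cop_o = cop_ext ocop"
definition counit_o :: "(oforest \<Rightarrow> 'k::field) \<Rightarrow> 'k" where
  "counit_o x = x oempty"

definition iota_lin :: "(pforest \<Rightarrow> 'k::field) \<Rightarrow> oforest \<Rightarrow> 'k" where
  "iota_lin = lin_ext iota"
definition iota_tensor :: "(pforest \<times> pforest \<Rightarrow> 'k::field) \<Rightarrow> oforest \<times> oforest \<Rightarrow> 'k" where
  "iota_tensor = lin_ext (map_prod iota iota)"

end

theory Submission
  imports Defs "HOL-Library.List_Lexorder"
begin


definition rk :: "'a::linorder set \<Rightarrow> 'a \<Rightarrow> nat" where
  "rk S x = card {y\<in>S. y \<le> x}"

lemma sorted_nth_rank:
  fixes S :: "'a::linorder set"
  assumes "finite S" "x \<in> S"
  shows "sorted_list_of_set S ! (rk S x - 1) = x" and "rk S x \<ge> 1"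
proof -
  let ?xs = "sorted_list_of_set S"
  have st: "sorted_wrt (<) ?xs" by simp
  have so: "sorted ?xs" by simp
  have di: "distinct ?xs" by simp
  have set: "set ?xs = S" using assms by simp
  have "x \<in> set ?xs" using set assms by simp
  then obtain i where i: "i < length ?xs" "?xs ! i = x" by (auto simp: in_set_conv_nth)
  have eq: "{y\<in>S. y \<le> x} = (\<lambda>j. ?xs ! j) ` {..i}"
  proof
    show "{y \<in> S. y \<le> x} \<subseteq> (!) ?xs ` {..i}"
    proof
      fix y assume y: "y \<in> {y \<in> S. y \<le> x}"
      then have "y \<in> set ?xs" using set by simp
      then obtain j where j: "j < length ?xs" "?xs ! j = y" by (auto simp: in_set_conv_nth)
      have "j \<le> i"
      proof (rule ccontr)
        assume "\<not> j \<le> i" then have "i < j" by simp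
        then have "?xs ! i < ?xs ! j" using st j(1) by (simp add: sorted_wrt_iff_nth_less)
        with i j y show False by auto
      qed
      then show "y \<in> (!) ?xs ` {..i}" using j by auto
    qed
  next
    show "(!) ?xs ` {..i} \<subseteq> {y \<in> S. y \<le> x}"
    proof
      fix y assume "y \<in> (!) ?xs ` {..i}"
      then obtain j where j: "j \<le> i" "y = ?xs ! j" by auto
      have jl: "j < length ?xs" using j i by simp
      then have "?xs ! j \<in> set ?xs" by (rule nth_mem)
      then have "y \<in> S" using set j(2) by simp
      moreover have "y \<le> x" using sorted_nth_mono[OF so j(1) i(1)] j i by simp
      ultimately show "y \<in> {y \<in> S. y \<le> x}" by simp
    qed
  qed
  have "inj_on (\<lambda>j. ?xs ! j) {..i}" using di i by (intro inj_on_nth) auto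
  then have "rk S x = Suc i" unfolding rk_def eq by (simp add: card_image)
  then show "sorted_list_of_set S ! (rk S x - 1) = x" and "rk S x \<ge> 1" using i by auto
qed

lemma rk_le_card: "finite S \<Longrightarrow> rk S x \<le> card S"
  unfolding rk_def by (rule card_mono) auto

lemma rk_less:
  fixes S :: "'a::linorder set"
  assumes "finite S" "x \<in> S" "y \<in> S" "x < y"
  shows "rk S x < rk S y"
  unfolding rk_def
proof (rule psubset_card_mono)
  show "finite {z \<in> S. z \<le> y}" using assms by simp
  have "y \<in> {z \<in> S. z \<le> y}" "y \<notin> {z \<in> S. z \<le> x}" using assms by auto
  then show "{z \<in> S. z \<le> x} \<subset> {z \<in> S. z \<le> y}" using assms by auto
qed

lemma rk_less_iff: "finite S \<Longrightarrow> x \<in> S \<Longrightarrow> y \<in> S \<Longrightarrow> rk S x < rk S y \<longleftrightarrow> x < (y::'a::linorder)"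
  using rk_less[of S x y] rk_less[of S y x] by (cases x y rule: linorder_cases) auto

lemma rk_inj: "finite S \<Longrightarrow> inj_on (rk S) (S::'a::linorder set)"
  unfolding inj_on_def using rk_less_iff by (metis less_irrefl linorder_neqE)

lemma rk_le_iff: "finite S \<Longrightarrow> x \<in> S \<Longrightarrow> y \<in> S \<Longrightarrow> rk S x \<le> rk S y \<longleftrightarrow> x \<le> (y::'a::linorder)"
  by (meson linorder_not_le rk_less_iff)

lemma rk_image: assumes "finite (S::'a::linorder set)" shows "rk S ` S = {1..card S}"
proof -
  have sub: "rk S ` S \<subseteq> {1..card S}" using assms sorted_nth_rank(2) rk_le_card by fastforce
  have "card (rk S ` S) = card S" using rk_inj[OF assms] by (simp add: card_image)
  then show ?thesis using sub by (intro card_subset_eq) auto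
qed

lemma rk_bij: "finite S \<Longrightarrow> bij_betw (rk S) (S::'a::linorder set) {1..card S}"
  by (simp add: bij_betw_def rk_image rk_inj)

definition mkf :: "'a::linorder set \<Rightarrow> ('a \<Rightarrow> 'a option) \<Rightarrow> oforest" where
  "mkf S p = (card S, \<lambda>i. if i \<in> {1..card S}
      then map_option (rk S) (p (sorted_list_of_set S ! (i - 1))) else None)"

lemma mkf_eqI:
  fixes S :: "'a::linorder set"
  assumes fin: "finite S" and n: "n = card S"
    and f: "\<And>x. x \<in> S \<Longrightarrow> f (rk S x) = map_option (rk S) (p x)"
    and out: "\<And>i. i \<notin> {1..n} \<Longrightarrow> f i = None"
  shows "(n, f) = mkf S p"
proof -
  have "f i = (if i \<in> {1..card S}
      then map_option (rk S) (p (sorted_list_of_set S ! (i - 1))) else None)" for i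
  proof (cases "i \<in> {1..card S}")
    case True
    then obtain x where x: "x \<in> S" "i = rk S x" using rk_image[OF fin] by (metis imageE)
    then show ?thesis using True f[OF x(1)] sorted_nth_rank[OF fin x(1)] by auto
  next
    case False
    then have "f i = None" using out n by simp
    then show ?thesis using False by auto
  qed
  then show ?thesis unfolding mkf_def n by auto
qed

lemma mkf_at:
  fixes S :: "'a::linorder set"
  assumes fin: "finite S" "x \<in> S"
  shows "snd (mkf S p) (rk S x) = map_option (rk S) (p x)"
  using sorted_nth_rank[OF assms] rk_le_card[OF fin(1), of x] by (simp add: mkf_def)

lemma mkf_out: "i \<notin> {1..card S} \<Longrightarrow> snd (mkf S p) i = None"
  by (auto simp add: mkf_def)

lemma fst_mkf[simp]: "fst (mkf S p) = card S" by (simp add: mkf_def)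



lemma verts_finite: "finite (verts_t t)" "finite (verts_f F)"
  by (induction t and F rule: verts_t_verts_f.induct) auto


lemma shiftp_eq_Nil[simp]: "shiftp x = [] \<longleftrightarrow> x = []" "[] = shiftp x \<longleftrightarrow> x = []"
  by (cases x; auto)+

lemma shiftp_eq_Cons[simp]: "shiftp y = i # q \<longleftrightarrow> (\<exists>j. i = Suc j \<and> y = j # q)"
  "i # q = shiftp y \<longleftrightarrow> (\<exists>j. i = Suc j \<and> y = j # q)"
  by (cases y; auto)+

lemma mem_shiftp_image[simp]: "i # q \<in> shiftp ` A \<longleftrightarrow> (\<exists>j. i = Suc j \<and> j # q \<in> A)"
  "[] \<in> shiftp ` A \<longleftrightarrow> [] \<in> A"
  by (auto simp: image_iff)

lemma inj_shiftp: "inj shiftp"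
proof (rule injI)
  fix x y assume "shiftp x = shiftp y" then show "x = y"
    by (cases x; cases y) auto
qed

lemma length_shiftp[simp]: "length (shiftp x) = length x"
  by (cases x) auto

lemma butlast_shiftp: "butlast (shiftp x) = shiftp (butlast x)"
  by (cases x) auto

lemma Nil_notin_verts_f: "[] \<notin> verts_f F"
  by (induction F) auto

lemma card_verts_t: "card (verts_t (PNode cs)) = Suc (card (verts_f cs))"
  using verts_finite Nil_notin_verts_f by simp

lemma card_verts_f_Cons: "card (verts_f (t # ts)) = card (verts_t t) + card (verts_f ts)"
proof -
  have d: "Cons 0 ` verts_t t \<inter> shiftp ` verts_f ts = {}"
  proof -
    show ?thesis by auto
  qed
  have "card (verts_f (t # ts)) = card (Cons 0 ` verts_t t) + card (shiftp ` verts_f ts)"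
    using d verts_finite by (simp add: card_Un_disjoint)
  also have "\<dots> = card (verts_t t) + card (verts_f ts)"
    using inj_shiftp by (simp add: card_image inj_on_subset)
  finally show ?thesis .
qed

lemma prefix_closed:
  "\<forall>x y. x @ y \<in> verts_t t \<longrightarrow> x \<in> verts_t t"
  "\<forall>x y. x @ y \<in> verts_f F \<longrightarrow> x \<noteq> [] \<longrightarrow> x \<in> verts_f F"
proof (induction t and F rule: verts_t_verts_f.induct)
  case (1 cs)
  then show ?case by (auto simp: append_eq_Cons_conv)
next
  case 2
  then show ?case by simp
next
  case (3 t ts)
  show ?case
  proof (intro allI impI)
    fix x y assume xy: "x @ y \<in> verts_f (t # ts)" and x: "x \<noteq> []"
    then obtain i x' where xi: "x = i # x'" by (cases x) auto
    show "x \<in> verts_f (t # ts)"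
    proof (cases i)
      case 0
      then have "x' @ y \<in> verts_t t" using xy xi by auto
      then show ?thesis using 3 xi 0 by auto
    next
      case (Suc j)
      then have "j # x' @ y \<in> verts_f ts" using xy xi by auto
      then have "j # x' \<in> verts_f ts" using 3 by (metis append_Cons list.simps(3))
      then show ?thesis using xi Suc by force
    qed
  qed
qed

lemma butlast_in_verts_f: "x \<in> verts_f F \<Longrightarrow> 2 \<le> length x \<Longrightarrow> butlast x \<in> verts_f F"
proof -
  assume a: "x \<in> verts_f F" "2 \<le> length x"
  have "length (butlast x) \<ge> 1" using a(2) by simp
  then have ne: "butlast x \<noteq> []" by (cases "butlast x") auto
  then have "x \<noteq> []" by auto
  then have "butlast x @ [last x] \<in> verts_f F" using a by simp
  note this ne
  then show ?thesis using prefix_closed(2)[of F] by blast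
qed

lemma butlast_in_verts_t: "x \<in> verts_t t \<Longrightarrow> butlast x \<in> verts_t t"
proof -
  assume a: "x \<in> verts_t t"
  show ?thesis
  proof (cases "x = []")
    case True then show ?thesis using a by simp
  next
    case False
    then have "butlast x @ [last x] \<in> verts_t t" using a by (simp add: append_butlast_last_id)
    then show ?thesis using prefix_closed(1)[of t] by blast
  qed
qed

lemma Nil_less_iff: "[] < (xs::'a::linorder list) \<longleftrightarrow> xs \<noteq> []"
  by (cases xs) auto

lemma Cons0_less_shiftp: "w \<noteq> [] \<Longrightarrow> 0 # x < shiftp w"
  by (cases w) auto

lemma rk_image_mono:
  fixes f :: "'a::linorder \<Rightarrow> 'b::linorder"
  assumes fin: "finite A" and mono: "\<And>x y. x \<in> A \<Longrightarrow> y \<in> A \<Longrightarrow> x < y \<Longrightarrow> f x < f y"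
    and x: "x \<in> A"
  shows "rk (f ` A) (f x) = rk A x"
proof -
  have le: "f y \<le> f x \<longleftrightarrow> y \<le> x" if "y \<in> A" for y
    using mono[OF that x] mono[OF x that] by (cases y x rule: linorder_cases) auto
  have inj: "inj_on f A"
    unfolding inj_on_def using mono by (metis less_irrefl linorder_neqE)
  have "{y \<in> f ` A. y \<le> f x} = f ` {y\<in>A. y \<le> x}" using le by auto
  then show ?thesis unfolding rk_def using inj by (simp add: card_image inj_on_subset)
qed

lemma rk_union_left:
  fixes A :: "'a::linorder set"
  assumes "\<And>a b. a \<in> A \<Longrightarrow> b \<in> B \<Longrightarrow> a < b" "x \<in> A"
  shows "rk (A \<union> B) x = rk A x"
proof -
  have "{y \<in> A \<union> B. y \<le> x} = {y \<in> A. y \<le> x}" using assms by (auto dest: leD)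
  then show ?thesis by (simp add: rk_def)
qed

lemma rk_union_right:
  fixes A :: "'a::linorder set"
  assumes fin: "finite A" "finite B" and lt: "\<And>a b. a \<in> A \<Longrightarrow> b \<in> B \<Longrightarrow> a < b" and x: "x \<in> B"
  shows "rk (A \<union> B) x = card A + rk B x"
proof -
  have "{y \<in> A \<union> B. y \<le> x} = A \<union> {y \<in> B. y \<le> x}" using lt x by force
  moreover have "A \<inter> {y \<in> B. y \<le> x} = {}" using lt by force
  ultimately show ?thesis using fin by (simp add: rk_def card_Un_disjoint)
qed

lemma verts_t_PNode_rk:
  "rk (verts_t (PNode cs)) [] = 1"
  "x \<in> verts_f cs \<Longrightarrow> rk (verts_t (PNode cs)) x = Suc (rk (verts_f cs) x)"
proof -
  have e: "verts_t (PNode cs) = {[]} \<union> verts_f cs" by simp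
  have lt: "\<And>a b. a \<in> {[]} \<Longrightarrow> b \<in> verts_f cs \<Longrightarrow> a < b"
    using Nil_notin_verts_f by (auto simp: Nil_less_iff)
  show "rk (verts_t (PNode cs)) [] = 1"
    unfolding e by (subst rk_union_left[OF lt]) (auto simp: rk_def)
  show "x \<in> verts_f cs \<Longrightarrow> rk (verts_t (PNode cs)) x = Suc (rk (verts_f cs) x)"
    unfolding e by (subst rk_union_right[OF _ _ lt]) (auto simp: verts_finite)
qed

lemma verts_f_Cons_rk:
  "v \<in> verts_t t \<Longrightarrow> rk (verts_f (t # ts)) (0 # v) = rk (verts_t t) v"
  "w \<in> verts_f ts \<Longrightarrow> rk (verts_f (t # ts)) (shiftp w) = card (verts_t t) + rk (verts_f ts) w"
proof -
  have e: "verts_f (t # ts) = Cons 0 ` verts_t t \<union> shiftp ` verts_f ts" by simp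
  have lt: "\<And>a b. a \<in> Cons 0 ` verts_t t \<Longrightarrow> b \<in> shiftp ` verts_f ts \<Longrightarrow> a < b"
    using Nil_notin_verts_f by (auto intro!: Cons0_less_shiftp)
  have m1: "rk (Cons 0 ` verts_t t) (0 # v) = rk (verts_t t) v" if "v \<in> verts_t t" for v
    by (rule rk_image_mono[OF verts_finite(1) _ that]) simp
  have m2: "rk (shiftp ` verts_f ts) (shiftp w) = rk (verts_f ts) w" if "w \<in> verts_f ts" for w
  proof (rule rk_image_mono[OF verts_finite(2) _ that])
    fix x y assume "x \<in> verts_f ts" "y \<in> verts_f ts" "x < y"
    then show "shiftp x < shiftp y" using Nil_notin_verts_f[of ts]
      by (cases x; cases y) auto
  qed
  show "v \<in> verts_t t \<Longrightarrow> rk (verts_f (t # ts)) (0 # v) = rk (verts_t t) v"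
    unfolding e by (subst rk_union_left[OF lt]) (auto simp: m1)
  show "w \<in> verts_f ts \<Longrightarrow> rk (verts_f (t # ts)) (shiftp w) = card (verts_t t) + rk (verts_f ts) w"
    unfolding e using inj_shiftp
    by (subst rk_union_right[OF _ _ lt]) (auto simp: verts_finite m2 card_image inj_on_subset)
qed

lemma rk_bounds: "finite S \<Longrightarrow> x \<in> S \<Longrightarrow> 1 \<le> rk S x \<and> rk S x \<le> card S"
  using sorted_nth_rank(2) rk_le_card by blast

lemma pre_main:
  "\<forall>off par. length (pre_t off par t) = card (verts_t t) \<and>
     (\<forall>x\<in>verts_t t. pre_t off par t ! (rk (verts_t t) x - 1) =
        (if x = [] then par else Some (off + rk (verts_t t) (butlast x))))"
  "\<forall>off par. length (pre_f off par F) = card (verts_f F) \<and>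
     (\<forall>x\<in>verts_f F. pre_f off par F ! (rk (verts_f F) x - 1) =
        (if length x = 1 then par else Some (off + rk (verts_f F) (butlast x))))"
proof (induction t and F rule: verts_t_verts_f.induct)
  case (1 cs)
  show ?case
  proof (intro allI conjI ballI)
    fix off par
    show "length (pre_t off par (PNode cs)) = card (verts_t (PNode cs))"
      using 1 card_verts_t[of cs] by simp
    fix x assume x: "x \<in> verts_t (PNode cs)"
    show "pre_t off par (PNode cs) ! (rk (verts_t (PNode cs)) x - 1) =
        (if x = [] then par else Some (off + rk (verts_t (PNode cs)) (butlast x)))"
    proof (cases "x = []")
      case True then show ?thesis by (simp add: verts_t_PNode_rk[simplified])
    next
      case False
      then have xc: "x \<in> verts_f cs" using x by simp
      have r1: "rk (verts_f cs) x \<ge> 1" using rk_bounds[OF verts_finite(2) xc] by simp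
      have "pre_t off par (PNode cs) ! (rk (verts_t (PNode cs)) x - 1)
          = pre_f (Suc off) (Some (Suc off)) cs ! (rk (verts_f cs) x - 1)"
        using r1 by (simp add: verts_t_PNode_rk(2)[OF xc, simplified])
      also have "\<dots> = (if length x = 1 then Some (Suc off) else Some (Suc off + rk (verts_f cs) (butlast x)))"
        using 1 xc by blast
      also have "\<dots> = Some (off + rk (verts_t (PNode cs)) (butlast x))"
      proof (cases "length x = 1")
        case True
        then have "butlast x = []" by (cases x) auto
        then show ?thesis using True by (simp add: verts_t_PNode_rk[simplified])
      next
        case False
        moreover have "length x \<noteq> 0" using \<open>x \<noteq> []\<close> by simp
        ultimately have "2 \<le> length x" by linarith
        then have "butlast x \<in> verts_f cs" using butlast_in_verts_f xc by blast
        then show ?thesis using False by (simp add: verts_t_PNode_rk[simplified])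
      qed
      finally show ?thesis using False by simp
    qed
  qed
next
  case 2
  then show ?case by simp
next
  case (3 t ts)
  show ?case
  proof (intro allI conjI ballI)
    fix off par
    show "length (pre_f off par (t # ts)) = card (verts_f (t # ts))"
      using 3 card_verts_f_Cons[of t ts] by simp
    have lt: "length (pre_t off par t) = card (verts_t t)" using 3 by blast
    fix x assume x: "x \<in> verts_f (t # ts)"
    then consider (a) v where "v \<in> verts_t t" "x = 0 # v" | (b) w where "w \<in> verts_f ts" "x = shiftp w"
      by auto
    then show "pre_f off par (t # ts) ! (rk (verts_f (t # ts)) x - 1) =
       (if length x = 1 then par else Some (off + rk (verts_f (t # ts)) (butlast x)))"
    proof cases
      case a
      have rb: "1 \<le> rk (verts_t t) v \<and> rk (verts_t t) v \<le> card (verts_t t)"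
        using rk_bounds[OF verts_finite(1) a(1)] .
      then have rb2: "rk (verts_t t) v - 1 < card (verts_t t)" by linarith
      have "pre_f off par (t # ts) ! (rk (verts_f (t # ts)) x - 1) = pre_t off par t ! (rk (verts_t t) v - 1)"
        using a rb2 lt by (simp add: verts_f_Cons_rk[simplified] nth_append)
      also have "\<dots> = (if v = [] then par else Some (off + rk (verts_t t) (butlast v)))"
        using 3 a(1) by blast
      also have "\<dots> = (if length x = 1 then par else Some (off + rk (verts_f (t # ts)) (butlast x)))"
      proof (cases "v = []")
        case True then show ?thesis using a by simp
      next
        case False
        have "butlast v \<in> verts_t t" using butlast_in_verts_t a(1) by blast
        then show ?thesis using a False by (simp add: verts_f_Cons_rk[simplified])
      qed
      finally show ?thesis .
    next
      case b
      have rb: "1 \<le> rk (verts_f ts) w \<and> rk (verts_f ts) w \<le> card (verts_f ts)"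
        using rk_bounds[OF verts_finite(2) b(1)] .
      have "pre_f off par (t # ts) ! (rk (verts_f (t # ts)) x - 1) =
          pre_f (off + card (verts_t t)) par ts ! (rk (verts_f ts) w - 1)"
      proof -
        have idx: "card (verts_t t) + rk (verts_f ts) w - 1 = length (pre_t off par t) + (rk (verts_f ts) w - 1)"
          using rb lt by linarith
        show ?thesis using b idx lt by (simp add: verts_f_Cons_rk[simplified]) (metis lt nth_append_length_plus)
      qed
      also have "\<dots> = (if length w = 1 then par else Some (off + card (verts_t t) + rk (verts_f ts) (butlast w)))"
        using 3 b(1) by blast
      also have "\<dots> = (if length x = 1 then par else Some (off + rk (verts_f (t # ts)) (butlast x)))"
      proof (cases "length w = 1")
        case True then show ?thesis using b by simp
      next
        case False
        have wne: "w \<noteq> []" using b(1) Nil_notin_verts_f by blast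
        then have "length w \<noteq> 0" by simp
        then have "2 \<le> length w" using False by linarith
        then have "butlast w \<in> verts_f ts" using butlast_in_verts_f b(1) by blast
        then show ?thesis using b False by (simp add: verts_f_Cons_rk[simplified] butlast_shiftp)
      qed
      finally show ?thesis .
    qed
  qed
qed

definition parR :: "nat list set \<Rightarrow> nat list \<Rightarrow> nat list option" where
  "parR B x = (if 2 \<le> length x \<and> butlast x \<in> B then Some (butlast x) else None)"

lemma iota_mkf: "iota F = mkf (verts_f F) (parR (verts_f F))"
proof -
  let ?L = "pre_f 0 None F"
  let ?S = "verts_f F"
  have len: "length ?L = card ?S" using pre_main(2) by blast
  show ?thesis unfolding iota_def Let_def
  proof (rule mkf_eqI[OF verts_finite(2) len])
    fix x assume x: "x \<in> ?S"
    have rb: "1 \<le> rk ?S x \<and> rk ?S x \<le> card ?S" using rk_bounds[OF verts_finite(2) x] .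
    have e: "?L ! (rk ?S x - 1) = (if length x = 1 then None else Some (rk ?S (butlast x)))"
      using pre_main(2) x by simp
    have xne: "x \<noteq> []" using x Nil_notin_verts_f by blast
    show "(if 1 \<le> rk ?S x \<and> rk ?S x \<le> length ?L then ?L ! (rk ?S x - 1) else None) =
        map_option (rk ?S) (parR ?S x)"
    proof (cases "length x = 1")
      case True then show ?thesis using rb len e by (simp add: parR_def)
    next
      case False
      moreover have "length x \<noteq> 0" using xne by simp
      ultimately have "2 \<le> length x" by linarith
      then have "butlast x \<in> ?S" using butlast_in_verts_f x by blast
      then show ?thesis using rb len e False \<open>2 \<le> length x\<close> by (simp add: parR_def)
    qed
  next
    fix i assume "i \<notin> {1..length ?L}"
    then show "(if 1 \<le> i \<and> i \<le> length ?L then ?L ! (i - 1) else None) = None" by auto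
  qed
qed



lemma mkf_iso:
  fixes A :: "'a::linorder set" and B :: "'b::linorder set"
  assumes fin: "finite A" and mono: "\<And>x y. x \<in> A \<Longrightarrow> y \<in> A \<Longrightarrow> x < y \<Longrightarrow> e x < e y"
    and img: "e ` A = B" and clos: "\<And>x a. x \<in> A \<Longrightarrow> p x = Some a \<Longrightarrow> a \<in> A"
    and par: "\<And>x. x \<in> A \<Longrightarrow> p' (e x) = map_option e (p x)"
  shows "mkf B p' = mkf A p"
proof -
  have inj: "inj_on e A"
    unfolding inj_on_def using mono by (metis less_irrefl linorder_neqE)
  have finB: "finite B" using fin img by blast
  have rke: "rk B (e x) = rk A x" if "x \<in> A" for x
  proof -
    have "rk (e ` A) (e x) = rk A x" by (rule rk_image_mono[OF fin]) (use mono that in auto)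
    then show ?thesis using img by simp
  qed
  have "(fst (mkf B p'), snd (mkf B p')) = mkf A p"
  proof (rule mkf_eqI[OF fin])
    show "fst (mkf B p') = card A" using card_image[OF inj] img by simp
    fix x assume x: "x \<in> A"
    have "snd (mkf B p') (rk A x) = snd (mkf B p') (rk B (e x))" using rke x by simp
    also have "\<dots> = map_option (rk B) (p' (e x))" using mkf_at[OF finB] x img by blast
    also have "\<dots> = map_option (rk A) (p x)"
      using par[OF x] clos[OF x] rke by (cases "p x") auto
    finally show "snd (mkf B p') (rk A x) = map_option (rk A) (p x)" .
  next
    fix i assume "i \<notin> {1..fst (mkf B p')}"
    then show "snd (mkf B p') i = None" by (simp add: mkf_out)
  qed
  then show ?thesis by (metis fst_mkf prod.collapse)
qed

definition restr_par :: "'a set \<Rightarrow> ('a \<Rightarrow> 'a option) \<Rightarrow> 'a \<Rightarrow> 'a option" where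
  "restr_par T p x = (case p x of None \<Rightarrow> None | Some a \<Rightarrow> if a \<in> T then Some a else None)"

lemma orestrict_mkf:
  fixes S :: "'a::linorder set"
  assumes fin: "finite S" and sub: "T \<subseteq> S" and clos: "\<And>x a. x \<in> S \<Longrightarrow> p x = Some a \<Longrightarrow> a \<in> S"
  shows "orestrict (rk S ` T) (mkf S p) = mkf T (restr_par T p)"
proof -
  let ?W = "rk S ` T"
  have finT: "finite T" using fin sub finite_subset by blast
  have injS: "inj_on (rk S) S" using rk_inj[OF fin] .
  have injT: "inj_on (rk S) T" using inj_on_subset[OF injS sub] .
  have finW: "finite ?W" using finT by blast
  have rkW: "rk ?W (rk S x) = rk T x" if "x \<in> T" for x
    by (rule rk_image_mono[OF finT _ that]) (use sub fin rk_less in blast)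
  have cW: "card ?W = card T" using injT by (simp add: card_image)
  obtain n f where nf: "mkf S p = (n, f)" by (cases "mkf S p")
  have fS: "f (rk S x) = map_option (rk S) (p x)" if "x \<in> S" for x
    using mkf_at[OF fin that, of p] nf by simp
  define g where "g = (\<lambda>j. if j \<in> {1..card ?W} then
                (case f (sorted_list_of_set ?W ! (j - 1)) of
                   None \<Rightarrow> None
                 | Some a \<Rightarrow> if a \<in> ?W then Some (rk ?W a) else None)
              else None)"
  have ores: "orestrict ?W (mkf S p) = (card ?W, g)"
    unfolding orestrict_def nf g_def Let_def rk_def by simp
  have "(card ?W, g) = mkf T (restr_par T p)"
  proof (rule mkf_eqI[OF finT cW])
    fix x assume x: "x \<in> T"
    have xS: "x \<in> S" using x sub by blast
    have rb: "1 \<le> rk T x \<and> rk T x \<le> card T" using rk_bounds[OF finT x] .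
    have "sorted_list_of_set ?W ! (rk T x - 1) = rk S x"
      using sorted_nth_rank(1)[OF finW, of "rk S x"] rkW[OF x] x by simp
    then have "g (rk T x) = (case p x of None \<Rightarrow> None
                 | Some a \<Rightarrow> if rk S a \<in> ?W then Some (rk ?W (rk S a)) else None)"
      unfolding g_def using rb cW fS[OF xS] by (cases "p x") auto
    also have "\<dots> = map_option (rk T) (restr_par T p x)"
    proof (cases "p x")
      case None then show ?thesis by (simp add: restr_par_def)
    next
      case (Some a)
      then have aS: "a \<in> S" using clos xS by blast
      have "rk S a \<in> ?W \<longleftrightarrow> a \<in> T" using injS aS sub by (auto dest: inj_onD)
      then show ?thesis using Some rkW by (simp add: restr_par_def)
    qed
    finally show "g (rk T x) = map_option (rk T) (restr_par T p x)" .
  next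
    fix i assume "i \<notin> {1..card ?W}"
    then show "g i = None" by (auto simp: g_def)
  qed
  then show ?thesis using ores by simp
qed



definition parT :: "nat list set \<Rightarrow> nat list \<Rightarrow> nat list option" where
  "parT B x = (if x \<noteq> [] \<and> butlast x \<in> B then Some (butlast x) else None)"

definition emb :: "(nat list \<Rightarrow> nat list) \<Rightarrow> nat list set \<Rightarrow> nat list set \<Rightarrow> bool" where
  "emb e A T \<longleftrightarrow> (\<forall>x\<in>A. \<forall>y\<in>A. x < y \<longrightarrow> e x < e y) \<and> e ` A = T \<and>
     (\<forall>x\<in>A. parR T (e x) = map_option e (parR A x))"

definition embT :: "(nat list \<Rightarrow> nat list) \<Rightarrow> nat list set \<Rightarrow> nat list set \<Rightarrow> bool" where
  "embT e A T \<longleftrightarrow> (\<forall>x\<in>A. \<forall>y\<in>A. x < y \<longrightarrow> e x < e y) \<and> e ` A = T \<and>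
     (\<forall>x\<in>A. parT T (e x) = map_option e (parT A x))"

definition cons_img :: "nat list set \<Rightarrow> nat list set \<Rightarrow> nat list set" where
  "cons_img A B = Cons 0 ` A \<union> shiftp ` B"

definition cons_map :: "(nat list \<Rightarrow> nat list) \<Rightarrow> (nat list \<Rightarrow> nat list) \<Rightarrow> nat list \<Rightarrow> nat list" where
  "cons_map e1 e2 x = (case x of [] \<Rightarrow> [] | i # q \<Rightarrow> if i = 0 then 0 # e1 q else shiftp (e2 ((i - 1) # q)))"

lemma cons_map_simps[simp]: "cons_map e1 e2 (0 # q) = 0 # e1 q" "cons_map e1 e2 (shiftp z) = (if z = [] then [] else shiftp (e2 z))"
  by (auto simp: cons_map_def split: list.splits)

lemma emb_comp: "emb f A B \<Longrightarrow> emb g B C \<Longrightarrow> emb (g \<circ> f) A C"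
  unfolding emb_def by (auto simp: image_comp[symmetric] option.map_comp)

lemma emb_id: "emb id A A"
  unfolding emb_def by (auto simp: option.map_id)

lemma embT_id: "embT id A A"
  unfolding embT_def by (auto simp: option.map_id)

lemma parR_shiftp_img: "parR (shiftp ` A) (shiftp x) = map_option shiftp (parR A x)"
proof -
  have "shiftp (butlast x) \<in> shiftp ` A \<longleftrightarrow> butlast x \<in> A" using inj_shiftp by (auto dest: injD)
  then show ?thesis by (simp add: parR_def butlast_shiftp)
qed

lemma emb_shiftp: "[] \<notin> A \<Longrightarrow> emb shiftp A (shiftp ` A)"
  unfolding emb_def
proof (intro conjI ballI impI)
  fix x y assume "[] \<notin> A" "x \<in> A" "y \<in> A" "x < y"
  then show "shiftp x < shiftp y" by (cases x; cases y) auto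
qed (auto simp: parR_shiftp_img)

lemma parT_eq_parR: "[] \<notin> T \<Longrightarrow> parT T x = parR T x"
proof -
  assume T: "[] \<notin> T"
  show ?thesis
  proof (cases "length x \<ge> 2")
    case True then show ?thesis by (auto simp: parT_def parR_def)
  next
    case False
    then have "butlast x = []" by (simp add: butlast_conv_take)
    then show ?thesis using T False by (auto simp: parT_def parR_def)
  qed
qed

lemma embT_of_emb: "[] \<notin> A \<Longrightarrow> [] \<notin> T \<Longrightarrow> emb e A T \<Longrightarrow> embT e A T"
  unfolding emb_def embT_def by (simp add: parT_eq_parR)

lemma shiftp_less_shiftp: "z \<noteq> [] \<Longrightarrow> w \<noteq> [] \<Longrightarrow> shiftp z < shiftp w \<longleftrightarrow> z < w"
  by (cases z; cases w) auto

lemma shiftp_not_less_Cons0: "z \<noteq> [] \<Longrightarrow> \<not> shiftp z < 0 # a"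
  by (cases z) auto

lemma Cons0_notin_shiftp_img[simp]: "0 # a \<notin> shiftp ` B"
  by auto

lemma mem_cons_img_Cons0[simp]: "0 # a \<in> cons_img A B \<longleftrightarrow> a \<in> A"
  by (auto simp: cons_img_def)

lemma mem_cons_img_shiftp[simp]: "z \<noteq> [] \<Longrightarrow> shiftp z \<in> cons_img A B \<longleftrightarrow> z \<in> B"
  using inj_shiftp by (cases z) (auto simp: cons_img_def dest: injD)

lemma parR_cons_img_Cons0: "parR (cons_img A B) (0 # y) = map_option (Cons 0) (parT A y)"
proof (cases y)
  case Nil then show ?thesis by (simp add: parR_def parT_def)
next
  case (Cons a l)
  then have "butlast (0 # y) = 0 # butlast y" by simp
  then show ?thesis using Cons by (auto simp: parR_def parT_def)
qed

lemma parR_cons_img_shiftp: "parR (cons_img A B) (shiftp z) = map_option shiftp (parR B z)"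
proof (cases "2 \<le> length z")
  case True
  then have ne: "butlast z \<noteq> []" by (cases z rule: rev_cases) auto
  have "butlast (shiftp z) = shiftp (butlast z)" by (simp add: butlast_shiftp)
  then show ?thesis using True ne by (auto simp: parR_def)
next
  case False then show ?thesis by (simp add: parR_def)
qed

lemma emb_cons:
  assumes e1: "embT e1 A1 T1" and e2: "emb e2 A2 T2" and nA: "[] \<notin> A2" and nT: "[] \<notin> T2"
  shows "emb (cons_map e1 e2) (cons_img A1 A2) (cons_img T1 T2)"
  unfolding emb_def
proof (intro conjI ballI impI)
  let ?e = "cons_map e1 e2"
  have m1: "\<And>x y. x \<in> A1 \<Longrightarrow> y \<in> A1 \<Longrightarrow> x < y \<Longrightarrow> e1 x < e1 y" using e1 by (auto simp: embT_def)
  have m2: "\<And>x y. x \<in> A2 \<Longrightarrow> y \<in> A2 \<Longrightarrow> x < y \<Longrightarrow> e2 x < e2 y" using e2 by (auto simp: emb_def)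
  have i1: "e1 ` A1 = T1" using e1 by (auto simp: embT_def)
  have i2: "e2 ` A2 = T2" using e2 by (auto simp: emb_def)
  have p1: "\<And>x. x \<in> A1 \<Longrightarrow> parT T1 (e1 x) = map_option e1 (parT A1 x)" using e1 by (auto simp: embT_def)
  have p2: "\<And>x. x \<in> A2 \<Longrightarrow> parR T2 (e2 x) = map_option e2 (parR A2 x)" using e2 by (auto simp: emb_def)
  have e2ne: "\<And>z. z \<in> A2 \<Longrightarrow> e2 z \<noteq> []" using i2 nT by force
  {
    fix x y assume x: "x \<in> cons_img A1 A2" and y: "y \<in> cons_img A1 A2" and lt: "x < y"
    show "?e x < ?e y"
    proof -
      consider (a) a where "a \<in> A1" "x = 0 # a" | (b) z where "z \<in> A2" "x = shiftp z"
        using x by (auto simp: cons_img_def)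
      then show ?thesis
      proof cases
        case a
        consider (aa) b where "b \<in> A1" "y = 0 # b" | (bb) w where "w \<in> A2" "y = shiftp w"
          using y by (auto simp: cons_img_def)
        then show ?thesis
        proof cases
          case aa then show ?thesis using a lt m1 by auto
        next
          case bb
          have "w \<noteq> []" "e2 w \<noteq> []" using bb nA e2ne by auto
          then show ?thesis using a bb by (simp add: Cons0_less_shiftp)
        qed
      next
        case b
        have zne: "z \<noteq> []" using b nA by auto
        consider (aa) b' where "b' \<in> A1" "y = 0 # b'" | (bb) w where "w \<in> A2" "y = shiftp w"
          using y by (auto simp: cons_img_def)
        then show ?thesis
        proof cases
          case aa then show ?thesis using b lt zne shiftp_not_less_Cons0 by auto
        next
          case bb
          have wne: "w \<noteq> []" using bb nA by auto
          then have "z < w" using lt b bb zne shiftp_less_shiftp by auto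
          then have "e2 z < e2 w" using m2 b bb by auto
          then show ?thesis using b bb zne wne e2ne shiftp_less_shiftp by auto
        qed
      qed
    qed
  }
  show "?e ` cons_img A1 A2 = cons_img T1 T2"
  proof -
    have "?e ` cons_img A1 A2 = Cons 0 ` (e1 ` A1) \<union> shiftp ` (e2 ` A2)"
      unfolding cons_img_def image_Un image_image using nA
      by (auto intro!: image_cong)
    then show ?thesis using i1 i2 by (simp add: cons_img_def)
  qed
  fix x assume x: "x \<in> cons_img A1 A2"
  consider (a) a where "a \<in> A1" "x = 0 # a" | (b) z where "z \<in> A2" "x = shiftp z"
    using x by (auto simp: cons_img_def)
  then show "parR (cons_img T1 T2) (?e x) = map_option ?e (parR (cons_img A1 A2) x)"
  proof cases
    case a
    then show ?thesis using p1[OF a(1)]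
      by (simp add: parR_cons_img_Cons0 option.map_comp comp_def)
  next
    case b
    have zne: "z \<noteq> []" using b nA by auto
    have "parR (cons_img T1 T2) (?e x) = map_option shiftp (map_option e2 (parR A2 z))"
      using b zne p2[OF b(1)] e2ne by (simp add: parR_cons_img_shiftp)
    also have "\<dots> = map_option ?e (parR (cons_img A1 A2) x)"
    proof (cases "parR A2 z")
      case None then show ?thesis using b by (simp add: parR_cons_img_shiftp)
    next
      case (Some c)
      then have "c \<in> A2" by (auto simp: parR_def split: if_splits)
      then have "c \<noteq> []" using nA by auto
      then show ?thesis using Some b by (simp add: parR_cons_img_shiftp)
    qed
    finally show ?thesis .
  qed
qed

lemma embT_insert:
  assumes e: "emb e A T" and nA: "[] \<notin> A" and nT: "[] \<notin> T"
    and cA: "\<And>x. x \<in> A \<Longrightarrow> 2 \<le> length x \<Longrightarrow> butlast x \<in> A"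
    and cT: "\<And>x. x \<in> T \<Longrightarrow> 2 \<le> length x \<Longrightarrow> butlast x \<in> T"
  shows "embT (\<lambda>x. if x = [] then [] else e x) (insert [] A) (insert [] T)"
  unfolding embT_def
proof (intro conjI ballI impI)
  let ?e = "\<lambda>x. if x = [] then [] else e x"
  have m: "\<And>x y. x \<in> A \<Longrightarrow> y \<in> A \<Longrightarrow> x < y \<Longrightarrow> e x < e y" using e by (auto simp: emb_def)
  have i: "e ` A = T" using e by (auto simp: emb_def)
  have p: "\<And>x. x \<in> A \<Longrightarrow> parR T (e x) = map_option e (parR A x)" using e by (auto simp: emb_def)
  have ene: "\<And>z. z \<in> A \<Longrightarrow> e z \<noteq> []" using i nT by force
  fix x y assume x: "x \<in> insert [] A" and y: "y \<in> insert [] A" and lt: "x < y"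
  show "?e x < ?e y"
  proof (cases "x = []")
    case True
    then have "y \<noteq> []" using lt by auto
    then show ?thesis using True y ene by (auto simp: Nil_less_iff)
  next
    case False
    then have "y \<noteq> []" using lt by auto
    then show ?thesis using False x y m lt by auto
  qed
next
  have i: "e ` A = T" using e by (auto simp: emb_def)
  show "(\<lambda>x. if x = [] then [] else e x) ` insert [] A = insert [] T"
    using i nA by (auto intro!: image_cong)
next
  fix x assume x: "x \<in> insert [] A"
  let ?e = "\<lambda>x. if x = [] then [] else e x"
  have i: "e ` A = T" using e by (auto simp: emb_def)
  have p: "\<And>x. x \<in> A \<Longrightarrow> parR T (e x) = map_option e (parR A x)" using e by (auto simp: emb_def)
  have ene: "\<And>z. z \<in> A \<Longrightarrow> e z \<noteq> []" using i nT by force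
  show "parT (insert [] T) (?e x) = map_option ?e (parT (insert [] A) x)"
  proof (cases "x = []")
    case True then show ?thesis by (simp add: parT_def)
  next
    case False
    then have xA: "x \<in> A" using x by simp
    have exT: "e x \<in> T" using i xA by blast
    show ?thesis
    proof (cases "2 \<le> length x")
      case True
      have bA: "butlast x \<in> A" using cA[OF xA True] .
      then have "parR A x = Some (butlast x)" using True by (simp add: parR_def)
      then have pe: "parR T (e x) = Some (e (butlast x))" using p[OF xA] by simp
      then have "butlast (e x) = e (butlast x)" "e x \<noteq> []"
        by (auto simp: parR_def split: if_splits)
      moreover have "butlast x \<noteq> []" using bA nA by auto
      moreover have "e (butlast x) \<in> T" using i bA by blast
      ultimately show ?thesis using False True bA exT ene[OF xA] bA
        by (auto simp: parT_def)
    next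
      case False2: False
      then have "parR A x = None" by (simp add: parR_def)
      then have "parR T (e x) = None" using p[OF xA] by simp
      then have "\<not> 2 \<le> length (e x)" using cT[OF exT] by (auto simp: parR_def)
      then have "butlast (e x) = []" by (simp add: butlast_conv_take)
      moreover have "butlast x = []" using False2 by (simp add: butlast_conv_take)
      ultimately show ?thesis using False ene[OF xA] by (simp add: parT_def)
    qed
  qed
qed

definition shiftn :: "nat \<Rightarrow> nat list \<Rightarrow> nat list" where
  "shiftn k x = (case x of [] \<Rightarrow> [] | i # q \<Rightarrow> (i + k) # q)"

lemma shiftp_shiftn: "shiftp (shiftn k x) = shiftn (Suc k) x"
  by (cases x) (auto simp: shiftn_def)

lemma length_shiftn_def: "length (shiftn k x) = length x"
  by (cases x) (auto simp: shiftn_def)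

lemma shiftn_0[simp]: "shiftn 0 x = x"
  by (cases x) (auto simp: shiftn_def)

lemma verts_f_append: "verts_f (G1 @ G2) = verts_f G1 \<union> shiftn (length G1) ` verts_f G2"
proof (induction G1)
  case Nil then show ?case by simp
next
  case (Cons t G1)
  then show ?case by (auto simp: image_Un image_image shiftp_shiftn)
qed

lemma hd_shiftp: "y \<noteq> [] \<Longrightarrow> hd (shiftp y) = Suc (hd y)"
  by (cases y) auto

lemma verts_f_hd: "x \<in> verts_f G \<Longrightarrow> hd x < length G"
proof (induction G arbitrary: x)
  case Nil then show ?case by simp
next
  case (Cons t G)
  from Cons.prems consider (a) v where "x = 0 # v" | (b) y where "y \<in> verts_f G" "x = shiftp y" by auto
  then show ?case
  proof cases
    case a then show ?thesis by simp
  next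
    case b
    then have "y \<noteq> []" using Nil_notin_verts_f by blast
    then show ?thesis using b Cons.IH[OF b(1)] by (simp add: hd_shiftp)
  qed
qed

definition app_map :: "nat \<Rightarrow> nat list \<Rightarrow> nat list" where
  "app_map k x = (case x of [] \<Rightarrow> [] | i # q \<Rightarrow> if i < k then 0 # x else shiftp ((i - k) # q))"

lemma butlast_shiftn: "butlast (shiftn k z) = shiftn k (butlast z)"
  by (cases z) (auto simp: shiftn_def)

lemma shiftn_less: "z \<noteq> [] \<Longrightarrow> w \<noteq> [] \<Longrightarrow> shiftn k z < shiftn k w \<longleftrightarrow> z < w"
  by (cases z; cases w) (auto simp: shiftn_def)

lemma shiftn_eq: "z \<noteq> [] \<Longrightarrow> w \<noteq> [] \<Longrightarrow> shiftn k z = shiftn k w \<longleftrightarrow> z = w"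
  by (cases z; cases w) (auto simp: shiftn_def)

lemma shiftn_ne: "shiftn k z = [] \<longleftrightarrow> z = []"
  by (cases z) (auto simp: shiftn_def)

lemma hd_shiftn: "z \<noteq> [] \<Longrightarrow> hd (shiftn k z) = hd z + k"
  by (cases z) (auto simp: shiftn_def)

lemma app_map_G1: "x \<noteq> [] \<Longrightarrow> hd x < k \<Longrightarrow> app_map k x = 0 # x"
  by (cases x) (auto simp: app_map_def)

lemma app_map_G2: "z \<noteq> [] \<Longrightarrow> app_map k (shiftn k z) = shiftp z"
  by (cases z) (auto simp: app_map_def shiftn_def)

lemma hd_butlast: "2 \<le> length x \<Longrightarrow> hd (butlast x) = hd x"
  by (cases x) auto

lemma emb_app:
  "emb (app_map (length G1)) (verts_f (G1 @ G2)) (cons_img (verts_f G1) (verts_f G2))"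
  unfolding emb_def
proof (intro conjI ballI impI)
  let ?k = "length G1"
  let ?A = "verts_f (G1 @ G2)"
  have A: "?A = verts_f G1 \<union> shiftn ?k ` verts_f G2" by (rule verts_f_append)
  have ne1: "\<And>x. x \<in> verts_f G1 \<Longrightarrow> x \<noteq> []" and ne2: "\<And>x. x \<in> verts_f G2 \<Longrightarrow> x \<noteq> []"
    using Nil_notin_verts_f by blast+
  have h1: "\<And>x. x \<in> verts_f G1 \<Longrightarrow> hd x < ?k" using verts_f_hd by blast
  have lt12: "\<And>x z. x \<in> verts_f G1 \<Longrightarrow> z \<in> verts_f G2 \<Longrightarrow> x < shiftn ?k z"
  proof -
    fix x z assume x: "x \<in> verts_f G1" and z: "z \<in> verts_f G2"
    obtain i q where xq: "x = i # q" using ne1[OF x] by (cases x) auto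
    obtain j r where zr: "z = j # r" using ne2[OF z] by (cases z) auto
    have "i < ?k" using h1[OF x] xq by simp
    then show "x < shiftn ?k z" using xq zr by (simp add: shiftn_def)
  qed
  {
    fix x y assume x: "x \<in> ?A" and y: "y \<in> ?A" and lt: "x < y"
    show "app_map ?k x < app_map ?k y"
    proof -
      consider (a) "x \<in> verts_f G1" | (b) z where "z \<in> verts_f G2" "x = shiftn ?k z" using x A by auto
      then show ?thesis
      proof cases
        case a
        consider (aa) "y \<in> verts_f G1" | (bb) w where "w \<in> verts_f G2" "y = shiftn ?k w" using y A by auto
        then show ?thesis
        proof cases
          case aa then show ?thesis using a lt h1 ne1 by (simp add: app_map_G1)
        next
          case bb then show ?thesis using a h1 ne1 ne2 by (simp add: app_map_G1 app_map_G2 Cons0_less_shiftp)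
        qed
      next
        case b
        consider (aa) "y \<in> verts_f G1" | (bb) w where "w \<in> verts_f G2" "y = shiftn ?k w" using y A by auto
        then show ?thesis
        proof cases
          case aa then have "y < x" using lt12 b by blast
          then show ?thesis using lt by auto
        next
          case bb then show ?thesis using b lt ne2 by (simp add: app_map_G2 shiftn_less shiftp_less_shiftp)
        qed
      qed
    qed
  }
  show "app_map ?k ` ?A = cons_img (verts_f G1) (verts_f G2)"
  proof -
    have "app_map ?k ` ?A = Cons 0 ` verts_f G1 \<union> shiftp ` verts_f G2"
      unfolding A image_Un image_image using ne1 ne2 h1
      by (auto simp: app_map_G1 app_map_G2 intro!: image_cong)
    then show ?thesis by (simp add: cons_img_def)
  qed
  fix x assume x: "x \<in> ?A"
  consider (a) "x \<in> verts_f G1" | (b) z where "z \<in> verts_f G2" "x = shiftn ?k z" using x A by auto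
  then show "parR (cons_img (verts_f G1) (verts_f G2)) (app_map ?k x) = map_option (app_map ?k) (parR ?A x)"
  proof cases
    case a
    have pA: "parR ?A x = parR (verts_f G1) x"
    proof (cases "2 \<le> length x")
      case True
      have "butlast x \<notin> shiftn ?k ` verts_f G2"
      proof
        assume "butlast x \<in> shiftn ?k ` verts_f G2"
        then obtain z where z: "z \<in> verts_f G2" "butlast x = shiftn ?k z" by auto
        have "hd (butlast x) = hd z + ?k" using z ne2 by (simp add: hd_shiftn)
        moreover have "hd (butlast x) < ?k" using hd_butlast[OF True] h1[OF a] by simp
        ultimately show False by simp
      qed
      then show ?thesis unfolding A by (simp add: parR_def)
    next
      case False then show ?thesis by (simp add: parR_def)
    qed
    have "parR (cons_img (verts_f G1) (verts_f G2)) (app_map ?k x) = map_option (Cons 0) (parR (verts_f G1) x)"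
      using a ne1 h1 Nil_notin_verts_f by (simp add: app_map_G1 parR_cons_img_Cons0 parT_eq_parR)
    also have "\<dots> = map_option (app_map ?k) (parR ?A x)"
    proof (cases "parR (verts_f G1) x")
      case None then show ?thesis using pA by simp
    next
      case (Some c)
      then have "c \<in> verts_f G1" by (auto simp: parR_def split: if_splits)
      then show ?thesis using pA Some ne1 h1 by (simp add: app_map_G1)
    qed
    finally show ?thesis .
  next
    case b
    have zne: "z \<noteq> []" using b ne2 by blast
    have pA: "parR ?A x = map_option (shiftn ?k) (parR (verts_f G2) z)"
    proof (cases "2 \<le> length z")
      case True
      have bne: "butlast z \<noteq> []" using True by (cases z rule: rev_cases) auto
      have "butlast (shiftn ?k z) \<notin> verts_f G1"
      proof
        assume "butlast (shiftn ?k z) \<in> verts_f G1"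
        then have "hd (butlast (shiftn ?k z)) < ?k" using h1 by blast
        moreover have "hd (butlast (shiftn ?k z)) = hd (butlast z) + ?k"
          using bne by (simp add: butlast_shiftn hd_shiftn)
        ultimately show False by simp
      qed
      moreover have "shiftn ?k (butlast z) \<in> shiftn ?k ` verts_f G2 \<longleftrightarrow> butlast z \<in> verts_f G2"
        using bne ne2 shiftn_eq by blast
      ultimately show ?thesis unfolding A using b True
        by (simp add: parR_def butlast_shiftn length_shiftn_def)
    next
      case False then show ?thesis using b by (simp add: parR_def length_shiftn_def)
    qed
    have "parR (cons_img (verts_f G1) (verts_f G2)) (app_map ?k x) = map_option shiftp (parR (verts_f G2) z)"
      using b zne by (simp add: app_map_G2 parR_cons_img_shiftp)
    also have "\<dots> = map_option (app_map ?k) (parR ?A x)"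
    proof (cases "parR (verts_f G2) z")
      case None then show ?thesis using pA by simp
    next
      case (Some c)
      then have "c \<in> verts_f G2" by (auto simp: parR_def split: if_splits)
      then show ?thesis using pA Some ne2 by (simp add: app_map_G2)
    qed
    finally show ?thesis .
  qed
qed



definition dset :: "nat list set \<Rightarrow> pforest \<Rightarrow> nat list set" where
  "dset V F = {y \<in> verts_f F. \<exists>v\<in>V. v \<noteq> [] \<and> (\<exists>w. y = v @ w)}"

lemma pforest_induct[case_names Nil Cons]:
  assumes "P []" and "\<And>cs ts. P cs \<Longrightarrow> P ts \<Longrightarrow> P (PNode cs # ts)"
  shows "P F"
proof -
  have "(\<forall>ts. P ts \<longrightarrow> P (t # ts))" "P F" for t
  proof (induction t and F rule: verts_t_verts_f.induct)
    case (1 cs) then show ?case using assms(2) by blast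
  next
    case 2 then show ?case using assms(1) by blast
  next
    case (3 t ts) then show ?case by blast
  qed
  then show ?thesis by blast
qed

lemma verts_f_Cons_img: "verts_f (PNode cs # ts) = cons_img (insert [] (verts_f cs)) (verts_f ts)"
  by (simp add: cons_img_def)

lemma dset_sub: "dset V F \<subseteq> verts_f F"
  by (auto simp: dset_def)

lemma dset_Cons:
  "dset V (PNode cs # ts) = cons_img (if [] \<in> first_part V then insert [] (verts_f cs)
      else dset (first_part V) cs) (dset (rest_part V) ts)"
proof (rule set_eqI)
  fix y
  show "y \<in> dset V (PNode cs # ts) \<longleftrightarrow> y \<in> cons_img (if [] \<in> first_part V then insert [] (verts_f cs)
      else dset (first_part V) cs) (dset (rest_part V) ts)"
  proof (cases y)
    case Nil
    then show ?thesis by (auto simp: dset_def cons_img_def)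
  next
    case (Cons i q)
    show ?thesis
    proof (cases i)
      case 0
      have "(\<exists>v\<in>V. v \<noteq> [] \<and> (\<exists>w. 0 # q = v @ w)) \<longleftrightarrow> (\<exists>v'. 0 # v' \<in> V \<and> (\<exists>w. q = v' @ w))"
        by (auto simp: Cons_eq_append_conv)
      also have "\<dots> \<longleftrightarrow> [] \<in> first_part V \<or> (\<exists>v'\<in>first_part V. v' \<noteq> [] \<and> (\<exists>w. q = v' @ w))"
        by (auto simp: first_part_def)
      finally have eq: "(\<exists>v\<in>V. v \<noteq> [] \<and> (\<exists>w. 0 # q = v @ w)) \<longleftrightarrow>
          [] \<in> first_part V \<or> (\<exists>v'\<in>first_part V. v' \<noteq> [] \<and> (\<exists>w. q = v' @ w))" .
      show ?thesis using Cons 0 eq by (auto simp: dset_def cons_img_def)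
    next
      case (Suc j)
      have "(\<exists>v\<in>V. v \<noteq> [] \<and> (\<exists>w. Suc j # q = v @ w)) \<longleftrightarrow>
          (\<exists>v\<in>rest_part V. v \<noteq> [] \<and> (\<exists>w. j # q = v @ w))"
      proof
        assume "\<exists>v\<in>V. v \<noteq> [] \<and> (\<exists>w. Suc j # q = v @ w)"
        then obtain v w where "v \<in> V" "v \<noteq> []" "Suc j # q = v @ w" by blast
        then obtain v' where "v = Suc j # v'" "q = v' @ w" by (auto simp: Cons_eq_append_conv)
        moreover have "j # v' \<in> rest_part V" using \<open>v \<in> V\<close> calculation by (auto simp: rest_part_def)
        ultimately show "\<exists>v\<in>rest_part V. v \<noteq> [] \<and> (\<exists>w. j # q = v @ w)"
          by (intro bexI[of _ "j # v'"]) auto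
      next
        assume "\<exists>v\<in>rest_part V. v \<noteq> [] \<and> (\<exists>w. j # q = v @ w)"
        then obtain v w where "v \<in> rest_part V" "v \<noteq> []" "j # q = v @ w" by blast
        then obtain v' where "v = j # v'" "q = v' @ w" by (auto simp: Cons_eq_append_conv)
        moreover have "Suc j # v' \<in> V" using \<open>v \<in> rest_part V\<close> calculation by (auto simp: rest_part_def)
        ultimately show "\<exists>v\<in>V. v \<noteq> [] \<and> (\<exists>w. Suc j # q = v @ w)"
          by (intro bexI[of _ "Suc j # v'"]) auto
      qed
      moreover have "y = shiftp (j # q)" using Cons Suc by simp
      ultimately show ?thesis using Cons Suc by (auto simp: dset_def cons_img_def)
    qed
  qed
qed

lemma cons_img_diff: "cons_img A B - cons_img C D = cons_img (A - C) (B - D)"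
proof -
  have d: "\<And>X Y. Cons 0 ` X \<inter> shiftp ` Y = {}" by auto
  have i1: "Cons 0 ` (A - C) = Cons 0 ` A - Cons 0 ` C" by (rule image_set_diff) simp
  have i2: "shiftp ` (B - D) = shiftp ` B - shiftp ` D" by (rule image_set_diff[OF inj_shiftp])
  show ?thesis unfolding cons_img_def i1 i2 using d[of A D] d[of C B] by blast
qed

lemma cons_img_empty: "cons_img {} B = shiftp ` B"
  by (simp add: cons_img_def)

lemma compl_closed:
  assumes "x \<in> verts_f F - dset V F" "2 \<le> length x"
  shows "butlast x \<in> verts_f F - dset V F"
proof -
  have b: "butlast x \<in> verts_f F" using assms butlast_in_verts_f by blast
  have "butlast x \<notin> dset V F"
  proof
    assume "butlast x \<in> dset V F"
    then obtain v w where "v \<in> V" "v \<noteq> []" "butlast x = v @ w" by (auto simp: dset_def)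
    moreover have "x \<noteq> []" using assms(2) by auto
    then have "x = butlast x @ [last x]" by simp
    ultimately have "x = v @ (w @ [last x])" by simp
    then show False using assms(1) \<open>v \<in> V\<close> \<open>v \<noteq> []\<close> by (auto simp: dset_def)
  qed
  then show ?thesis using b by blast
qed

lemma roo_emb: "\<forall>V. \<exists>e. emb e (verts_f (roo_f V F)) (verts_f F - dset V F)"
proof (induction F rule: pforest_induct)
  case Nil
  then show ?case by (auto simp: dset_def intro: exI[of _ id] emb_id)
next
  case (Cons cs ts)
  show ?case
  proof
    fix V
    let ?V1 = "first_part V" and ?V2 = "rest_part V"
    obtain e2 where e2: "emb e2 (verts_f (roo_f ?V2 ts)) (verts_f ts - dset ?V2 ts)" using Cons by blast
    have nT2: "[] \<notin> verts_f ts - dset ?V2 ts" using Nil_notin_verts_f by blast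
    show "\<exists>e. emb e (verts_f (roo_f V (PNode cs # ts))) (verts_f (PNode cs # ts) - dset V (PNode cs # ts))"
    proof (cases "[] \<in> ?V1")
      case True
      have r: "roo_f V (PNode cs # ts) = roo_f ?V2 ts" using True by simp
      have T: "verts_f (PNode cs # ts) - dset V (PNode cs # ts) = shiftp ` (verts_f ts - dset ?V2 ts)"
        unfolding verts_f_Cons_img dset_Cons using True by (simp add: cons_img_diff cons_img_empty)
      have "emb (shiftp \<circ> e2) (verts_f (roo_f ?V2 ts)) (shiftp ` (verts_f ts - dset ?V2 ts))"
        by (rule emb_comp[OF e2 emb_shiftp[OF nT2]])
      then show ?thesis unfolding r T by blast
    next
      case False
      obtain e1 where e1: "emb e1 (verts_f (roo_f ?V1 cs)) (verts_f cs - dset ?V1 cs)" using Cons by blast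
      have r: "roo_f V (PNode cs # ts) = PNode (roo_f ?V1 cs) # roo_f ?V2 ts" using False by simp
      have T: "verts_f (PNode cs # ts) - dset V (PNode cs # ts) =
          cons_img (insert [] (verts_f cs - dset ?V1 cs)) (verts_f ts - dset ?V2 ts)"
      proof -
        have "insert [] (verts_f cs) - dset ?V1 cs = insert [] (verts_f cs - dset ?V1 cs)"
          using dset_sub Nil_notin_verts_f by blast
        then show ?thesis unfolding verts_f_Cons_img dset_Cons using False by (simp add: cons_img_diff)
      qed
      have e1': "embT (\<lambda>x. if x = [] then [] else e1 x) (insert [] (verts_f (roo_f ?V1 cs)))
          (insert [] (verts_f cs - dset ?V1 cs))"
        by (rule embT_insert[OF e1]) (use Nil_notin_verts_f butlast_in_verts_f compl_closed in blast)+
      have "emb (cons_map (\<lambda>x. if x = [] then [] else e1 x) e2)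
          (cons_img (insert [] (verts_f (roo_f ?V1 cs))) (verts_f (roo_f ?V2 ts)))
          (cons_img (insert [] (verts_f cs - dset ?V1 cs)) (verts_f ts - dset ?V2 ts))"
        by (rule emb_cons[OF e1' e2 Nil_notin_verts_f nT2])
      then show ?thesis unfolding r T unfolding verts_f_Cons_img by blast
    qed
  qed
qed

lemma lea_emb: "\<forall>V. \<exists>e. emb e (verts_f (lea_f V F)) (dset V F)"
proof (induction F rule: pforest_induct)
  case Nil
  then show ?case by (auto simp: dset_def intro: exI[of _ id] emb_id)
next
  case (Cons cs ts)
  show ?case
  proof
    fix V
    let ?V1 = "first_part V" and ?V2 = "rest_part V"
    obtain e2 where e2: "emb e2 (verts_f (lea_f ?V2 ts)) (dset ?V2 ts)" using Cons by blast
    have nT2: "[] \<notin> dset ?V2 ts" using Nil_notin_verts_f dset_sub by blast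
    show "\<exists>e. emb e (verts_f (lea_f V (PNode cs # ts))) (dset V (PNode cs # ts))"
    proof (cases "[] \<in> ?V1")
      case True
      have r: "lea_f V (PNode cs # ts) = PNode cs # lea_f ?V2 ts" using True by simp
      have T: "dset V (PNode cs # ts) = cons_img (insert [] (verts_f cs)) (dset ?V2 ts)"
        unfolding dset_Cons using True by simp
      have "emb (cons_map id e2) (cons_img (insert [] (verts_f cs)) (verts_f (lea_f ?V2 ts)))
          (cons_img (insert [] (verts_f cs)) (dset ?V2 ts))"
        by (rule emb_cons[OF embT_id e2 Nil_notin_verts_f nT2])
      then show ?thesis unfolding r T unfolding verts_f_Cons_img by blast
    next
      case False
      obtain e1 where e1: "emb e1 (verts_f (lea_f ?V1 cs)) (dset ?V1 cs)" using Cons by blast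
      have r: "lea_f V (PNode cs # ts) = lea_f ?V1 cs @ lea_f ?V2 ts" using False by simp
      have T: "dset V (PNode cs # ts) = cons_img (dset ?V1 cs) (dset ?V2 ts)"
        unfolding dset_Cons using False by simp
      have e1': "embT e1 (verts_f (lea_f ?V1 cs)) (dset ?V1 cs)"
        by (rule embT_of_emb[OF _ _ e1]) (use Nil_notin_verts_f dset_sub in blast)+
      have "emb (cons_map e1 e2 \<circ> app_map (length (lea_f ?V1 cs)))
          (verts_f (lea_f ?V1 cs @ lea_f ?V2 ts)) (cons_img (dset ?V1 cs) (dset ?V2 ts))"
        by (rule emb_comp[OF emb_app emb_cons[OF e1' e2 Nil_notin_verts_f nT2]])
      then show ?thesis unfolding r T by blast
    qed
  qed
qed



lemma prefix_less: "w \<noteq> [] \<Longrightarrow> (u::nat list) < u @ w"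
  by (induction u) (auto simp: Nil_less_iff)

lemma trancl_map_inj:
  assumes inj: "inj_on f S" and sub: "R \<subseteq> S \<times> S"
  shows "(map_prod f f ` R)\<^sup>+ = map_prod f f ` R\<^sup>+"
proof
  show "map_prod f f ` R\<^sup>+ \<subseteq> (map_prod f f ` R)\<^sup>+"
  proof
    fix p assume "p \<in> map_prod f f ` R\<^sup>+"
    then obtain a b where ab: "(a, b) \<in> R\<^sup>+" "p = (f a, f b)" by auto
    from ab(1) have "(f a, f b) \<in> (map_prod f f ` R)\<^sup>+"
    proof (induction rule: trancl_induct)
      case (base y) then show ?case by (auto intro: r_into_trancl)
    next
      case (step y z)
      then have "(f y, f z) \<in> map_prod f f ` R" by auto
      then show ?case using step by (auto intro: trancl_into_trancl)
    qed
    then show "p \<in> (map_prod f f ` R)\<^sup>+" using ab by simp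
  qed
next
  have R_S: "R\<^sup>+ \<subseteq> S \<times> S" using sub trancl_subset_Sigma by blast
  show "(map_prod f f ` R)\<^sup>+ \<subseteq> map_prod f f ` R\<^sup>+"
  proof
    fix p assume "p \<in> (map_prod f f ` R)\<^sup>+"
    then obtain x y where xy: "(x, y) \<in> (map_prod f f ` R)\<^sup>+" "p = (x, y)" by (cases p) auto
    from xy(1) have "\<exists>a b. (a, b) \<in> R\<^sup>+ \<and> x = f a \<and> y = f b"
    proof (induction rule: trancl_induct)
      case (base y) then show ?case by (auto intro: r_into_trancl)
    next
      case (step y z)
      then obtain a b where ab: "(a, b) \<in> R\<^sup>+" "x = f a" "y = f b" by blast
      from step(2) obtain c d where cd: "(c, d) \<in> R" "y = f c" "z = f d" by auto
      have "b \<in> S" using ab(1) R_S by blast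
      moreover have "c \<in> S" using cd(1) sub by blast
      ultimately have "b = c" using inj ab(3) cd(2) by (auto dest: inj_onD)
      then have "(a, d) \<in> R\<^sup>+" using ab(1) cd(1) by (auto intro: trancl_into_trancl)
      then show ?case using ab cd by blast
    qed
    then show "p \<in> map_prod f f ` R\<^sup>+" using xy(2) by force
  qed
qed

definition Rp :: "pforest \<Rightarrow> (nat list \<times> nat list) set" where
  "Rp F = {(butlast x, x) | x. x \<in> verts_f F \<and> 2 \<le> length x}"

lemma Rp_sub: "Rp F \<subseteq> verts_f F \<times> verts_f F"
  using butlast_in_verts_f by (auto simp: Rp_def)

lemma Rp_trancl: "(Rp F)\<^sup>+ = {(u, v). u \<in> verts_f F \<and> v \<in> verts_f F \<and> (\<exists>w. w \<noteq> [] \<and> v = u @ w)}"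
proof (intro set_eqI iffI)
  fix p assume "p \<in> (Rp F)\<^sup>+"
  then obtain u v where uv: "(u, v) \<in> (Rp F)\<^sup>+" "p = (u, v)" by (cases p) auto
  from uv(1) have "u \<in> verts_f F \<and> v \<in> verts_f F \<and> (\<exists>w. w \<noteq> [] \<and> v = u @ w)"
  proof (induction rule: trancl_induct)
    case (base y)
    then obtain x where x: "y = x" "x \<in> verts_f F" "2 \<le> length x" "u = butlast x" by (auto simp: Rp_def)
    then have "x = butlast x @ [last x]" by (cases x rule: rev_cases) auto
    then show ?case using x butlast_in_verts_f by (metis list.distinct(1))
  next
    case (step y z)
    then obtain x where x: "z = x" "x \<in> verts_f F" "2 \<le> length x" "y = butlast x" by (auto simp: Rp_def)
    then have "x = butlast x @ [last x]" by (cases x rule: rev_cases) auto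
    then show ?case using x step by (metis append_assoc append_is_Nil_conv)
  qed
  then show "p \<in> {(u, v). u \<in> verts_f F \<and> v \<in> verts_f F \<and> (\<exists>w. w \<noteq> [] \<and> v = u @ w)}" using uv by simp
next
  fix p assume "p \<in> {(u, v). u \<in> verts_f F \<and> v \<in> verts_f F \<and> (\<exists>w. w \<noteq> [] \<and> v = u @ w)}"
  then obtain u v w where uvw: "p = (u, v)" "u \<in> verts_f F" "v \<in> verts_f F" "w \<noteq> []" "v = u @ w" by blast
  have "\<forall>v. v \<in> verts_f F \<longrightarrow> v = u @ w \<longrightarrow> (u, v) \<in> (Rp F)\<^sup>+" using uvw(4)
  proof (induction w rule: rev_induct)
    case Nil then show ?case by simp
  next
    case (snoc c w)
    show ?case
    proof (intro allI impI)
      fix v assume v: "v \<in> verts_f F" "v = u @ w @ [c]"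
      have un: "u \<noteq> []" using uvw(2) Nil_notin_verts_f by blast
      have len: "2 \<le> length v" using v un by (cases u) auto
      have bl: "butlast v = u @ w" using v by (simp add: butlast_append)
      have step: "(u @ w, v) \<in> Rp F" using v len bl unfolding Rp_def by (metis (mono_tags, lifting) mem_Collect_eq)
      show "(u, v) \<in> (Rp F)\<^sup>+"
      proof (cases "w = []")
        case True then show ?thesis using step by auto
      next
        case False
        have "u @ w \<in> verts_f F" using butlast_in_verts_f[OF v(1) len] bl by simp
        then have "(u, u @ w) \<in> (Rp F)\<^sup>+" using snoc.IH False by blast
        then show ?thesis using step by (auto intro: trancl_into_trancl)
      qed
    qed
  qed
  then show "p \<in> (Rp F)\<^sup>+" using uvw by blast
qed

lemma restr_par_parR: "T \<subseteq> S \<Longrightarrow> restr_par T (parR S) = parR T"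
  by (auto simp: restr_par_def parR_def fun_eq_iff)

lemma iota_snd:
  "snd (iota F) i = (if \<exists>x\<in>verts_f F. i = rk (verts_f F) x
     then (let x = (THE x. x \<in> verts_f F \<and> i = rk (verts_f F) x) in
           if 2 \<le> length x then Some (rk (verts_f F) (butlast x)) else None) else None)"
proof -
  let ?S = "verts_f F"
  have fin: "finite ?S" by (rule verts_finite)
  show ?thesis
  proof (cases "\<exists>x\<in>?S. i = rk ?S x")
    case True
    then obtain x where x: "x \<in> ?S" "i = rk ?S x" by blast
    have the: "(THE x. x \<in> ?S \<and> i = rk ?S x) = x"
      using x rk_inj[OF fin] by (auto dest: inj_onD)
    have "snd (iota F) i = map_option (rk ?S) (parR ?S x)"
      unfolding iota_mkf x(2) by (rule mkf_at[OF fin x(1)])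
    then show ?thesis using True the x butlast_in_verts_f by (auto simp: parR_def Let_def)
  next
    case False
    then have "i \<notin> {1..card ?S}" using rk_image[OF fin] by auto
    then show ?thesis using False unfolding iota_mkf by (simp add: mkf_out)
  qed
qed

lemma parent_rel_iota: "parent_rel (snd (iota F)) = map_prod (rk (verts_f F)) (rk (verts_f F)) ` Rp F"
proof -
  let ?S = "verts_f F" let ?r = "rk (verts_f F)"
  have fin: "finite ?S" by (rule verts_finite)
  have key: "snd (iota F) (?r x) = (if 2 \<le> length x then Some (?r (butlast x)) else None)" if "x \<in> ?S" for x
  proof -
    have "snd (iota F) (?r x) = map_option ?r (parR ?S x)"
      unfolding iota_mkf by (rule mkf_at[OF fin that])
    then show ?thesis using that butlast_in_verts_f by (auto simp: parR_def)
  qed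
  show ?thesis
  proof (intro set_eqI iffI)
    fix p assume "p \<in> parent_rel (snd (iota F))"
    then obtain j i where p: "p = (j, i)" "snd (iota F) i = Some j" by (auto simp: parent_rel_def)
    have "\<exists>x\<in>?S. i = ?r x"
    proof (rule ccontr)
      assume "\<not> (\<exists>x\<in>?S. i = ?r x)"
      then have "i \<notin> {1..card ?S}" using rk_image[OF fin] by auto
      then show False using p(2) unfolding iota_mkf by (simp add: mkf_out)
    qed
    then obtain x where x: "x \<in> ?S" "i = ?r x" by blast
    then have "2 \<le> length x" "j = ?r (butlast x)" using key[OF x(1)] p(2) by (auto split: if_splits)
    then show "p \<in> map_prod ?r ?r ` Rp F" using p x unfolding Rp_def by force
  next
    fix p assume "p \<in> map_prod ?r ?r ` Rp F"
    then obtain x where x: "x \<in> ?S" "2 \<le> length x" "p = (?r (butlast x), ?r x)" by (auto simp: Rp_def)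
    then show "p \<in> parent_rel (snd (iota F))" using key[OF x(1)] by (simp add: parent_rel_def)
  qed
qed

lemma trancl_iota:
  "(parent_rel (snd (iota F)))\<^sup>+ = map_prod (rk (verts_f F)) (rk (verts_f F)) `
     {(u, v). u \<in> verts_f F \<and> v \<in> verts_f F \<and> (\<exists>w. w \<noteq> [] \<and> v = u @ w)}"
  unfolding parent_rel_iota Rp_trancl[symmetric]
  by (rule trancl_map_inj[OF rk_inj[OF verts_finite(2)] Rp_sub])

lemma fst_iota: "fst (iota F) = card (verts_f F)"
  unfolding iota_mkf by simp

lemma iota_pair: "iota F = (card (verts_f F), snd (iota F))"
  using fst_iota by (metis prod.collapse)

lemma trancl_iota_rk:
  assumes "u \<in> verts_f F" "v \<in> verts_f F"
  shows "(rk (verts_f F) u, rk (verts_f F) v) \<in> (parent_rel (snd (iota F)))\<^sup>+ \<longleftrightarrow> (\<exists>w. w \<noteq> [] \<and> v = u @ w)"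
proof -
  have inj: "inj_on (rk (verts_f F)) (verts_f F)" by (rule rk_inj[OF verts_finite(2)])
  show ?thesis unfolding trancl_iota using assms inj by (auto dest: inj_onD)
qed

lemma trancl_iota_range:
  "(a, b) \<in> (parent_rel (snd (iota F)))\<^sup>+ \<Longrightarrow> a \<in> rk (verts_f F) ` verts_f F \<and> b \<in> rk (verts_f F) ` verts_f F"
  unfolding trancl_iota by auto

lemma oadm_iota: "oadm_cuts (iota F) = (\<lambda>V. rk (verts_f F) ` V) ` padm_cuts F"
proof -
  let ?S = "verts_f F" let ?r = "rk (verts_f F)" let ?P = "parent_rel (snd (iota F))"
  have fin: "finite ?S" by (rule verts_finite)
  have img: "?r ` ?S = {1..card ?S}" by (rule rk_image[OF fin])
  have inj: "inj_on ?r ?S" by (rule rk_inj[OF fin])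
  have o: "oadm_cuts (iota F) = {W. W \<subseteq> {1..card ?S} \<and> (\<forall>u\<in>W. \<forall>v\<in>W. (u, v) \<notin> ?P\<^sup>+)}"
    by (subst iota_pair) (simp add: oadm_cuts_def)
  show ?thesis
  proof (intro set_eqI iffI)
    fix W assume "W \<in> oadm_cuts (iota F)"
    then have W: "W \<subseteq> ?r ` ?S" "\<forall>u\<in>W. \<forall>v\<in>W. (u, v) \<notin> ?P\<^sup>+" using o img by auto
    define V where "V = {x \<in> ?S. ?r x \<in> W}"
    have WV: "W = ?r ` V" using W(1) by (auto simp: V_def)
    have "V \<in> padm_cuts F"
      unfolding padm_cuts_def
    proof (intro CollectI conjI ballI impI)
      show "V \<subseteq> ?S" by (auto simp: V_def)
      fix u v assume uv: "u \<in> V" "v \<in> V" "u \<noteq> v"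
      show "\<not> (\<exists>w. v = u @ w)"
      proof
        assume "\<exists>w. v = u @ w"
        then obtain w where "v = u @ w" by blast
        then have "w \<noteq> []" using uv by auto
        then have "(?r u, ?r v) \<in> ?P\<^sup>+" using trancl_iota_rk uv \<open>v = u @ w\<close> by (auto simp: V_def)
        then show False using W(2) uv by (auto simp: V_def)
      qed
    qed
    then show "W \<in> (\<lambda>V. ?r ` V) ` padm_cuts F" using WV by blast
  next
    fix W assume "W \<in> (\<lambda>V. ?r ` V) ` padm_cuts F"
    then obtain V where V: "V \<in> padm_cuts F" "W = ?r ` V" by blast
    have VS: "V \<subseteq> ?S" using V(1) by (simp add: padm_cuts_def)
    have "\<forall>u\<in>W. \<forall>v\<in>W. (u, v) \<notin> ?P\<^sup>+"
    proof (intro ballI)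
      fix a b assume ab: "a \<in> W" "b \<in> W"
      then obtain u v where uv: "u \<in> V" "v \<in> V" "a = ?r u" "b = ?r v" using V(2) by blast
      show "(a, b) \<notin> ?P\<^sup>+"
      proof
        assume "(a, b) \<in> ?P\<^sup>+"
        then obtain w where w: "w \<noteq> []" "v = u @ w" using trancl_iota_rk uv VS by blast
        then have "u \<noteq> v" by auto
        moreover have "\<forall>u\<in>V. \<forall>v\<in>V. u \<noteq> v \<longrightarrow> \<not> (\<exists>w. v = u @ w)" using V(1) by (simp add: padm_cuts_def)
        ultimately show False using uv w by blast
      qed
    qed
    moreover have "W \<subseteq> {1..card ?S}" using V(2) VS img by auto
    ultimately show "W \<in> oadm_cuts (iota F)" using o by simp
  qed
qed

lemma olea_iota:
  assumes VS: "V \<subseteq> verts_f F"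
  shows "olea_set (iota F) (rk (verts_f F) ` V) = rk (verts_f F) ` dset V F"
proof -
  let ?S = "verts_f F" let ?r = "rk (verts_f F)" let ?P = "parent_rel (snd (iota F))"
  have fin: "finite ?S" by (rule verts_finite)
  have img: "?r ` ?S = {1..card ?S}" by (rule rk_image[OF fin])
  have inj: "inj_on ?r ?S" by (rule rk_inj[OF fin])
  have o: "olea_set (iota F) (?r ` V) = {x \<in> {1..card ?S}. \<exists>v\<in>?r ` V. (v, x) \<in> ?P\<^sup>*}"
    by (subst iota_pair) (simp add: olea_set_def)
  have key: "(?r v, ?r y) \<in> ?P\<^sup>* \<longleftrightarrow> (\<exists>w. y = v @ w)" if "v \<in> ?S" "y \<in> ?S" for v y
  proof -
    have "(?r v, ?r y) \<in> ?P\<^sup>* \<longleftrightarrow> ?r v = ?r y \<or> (?r v, ?r y) \<in> ?P\<^sup>+"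
      by (auto simp: rtrancl_eq_or_trancl)
    also have "\<dots> \<longleftrightarrow> v = y \<or> (\<exists>w. w \<noteq> [] \<and> y = v @ w)"
      using trancl_iota_rk[OF that] inj that by (auto dest: inj_onD)
    also have "\<dots> \<longleftrightarrow> (\<exists>w. y = v @ w)" by auto
    finally show ?thesis .
  qed
  show ?thesis
  proof (intro set_eqI iffI)
    fix x assume "x \<in> olea_set (iota F) (?r ` V)"
    then have x: "x \<in> {1..card ?S}" "\<exists>v\<in>?r ` V. (v, x) \<in> ?P\<^sup>*" using o by auto
    then obtain y where y: "y \<in> ?S" "x = ?r y" using img by blast
    obtain v where v: "v \<in> V" "(?r v, x) \<in> ?P\<^sup>*" using x(2) by blast
    have "\<exists>w. y = v @ w" using key[of v y] v VS y by auto
    moreover have "v \<noteq> []" using v(1) VS Nil_notin_verts_f by blast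
    ultimately have "y \<in> dset V F" using y v unfolding dset_def by blast
    then show "x \<in> ?r ` dset V F" using y by blast
  next
    fix x assume "x \<in> ?r ` dset V F"
    then obtain y v w where y: "x = ?r y" "y \<in> ?S" "v \<in> V" "y = v @ w" by (auto simp: dset_def)
    have "(?r v, ?r y) \<in> ?P\<^sup>*" using key[of v y] y VS by auto
    moreover have "x \<in> {1..card ?S}" using y img by blast
    ultimately show "x \<in> olea_set (iota F) (?r ` V)" using o y by blast
  qed
qed

lemma iota_roo:
  assumes VS: "V \<subseteq> verts_f F"
  shows "orestrict ({1..fst (iota F)} - olea_set (iota F) (rk (verts_f F) ` V)) (iota F) = iota (roo_f V F)"
proof -
  let ?S = "verts_f F" let ?r = "rk (verts_f F)" let ?D = "dset V F"
  have fin: "finite ?S" by (rule verts_finite)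
  have img: "?r ` ?S = {1..card ?S}" by (rule rk_image[OF fin])
  have inj: "inj_on ?r ?S" by (rule rk_inj[OF fin])
  have DS: "?D \<subseteq> ?S" by (rule dset_sub)
  have W: "{1..fst (iota F)} - olea_set (iota F) (?r ` V) = ?r ` (?S - ?D)"
    unfolding olea_iota[OF VS] fst_iota img[symmetric] using inj DS by (simp add: inj_on_image_set_diff)
  have "orestrict (?r ` (?S - ?D)) (iota F) = mkf (?S - ?D) (parR (?S - ?D))"
    unfolding iota_mkf
    by (subst orestrict_mkf[OF fin]) (auto simp: restr_par_parR parR_def split: if_splits)
  also have "\<dots> = mkf (verts_f (roo_f V F)) (parR (verts_f (roo_f V F)))"
  proof -
    obtain e where e: "emb e (verts_f (roo_f V F)) (?S - ?D)" using roo_emb by blast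
    show ?thesis
      by (rule mkf_iso[OF verts_finite(2)]) (use e in \<open>auto simp: emb_def parR_def split: if_splits\<close>)
  qed
  also have "\<dots> = iota (roo_f V F)" by (rule iota_mkf[symmetric])
  finally show ?thesis unfolding W .
qed

lemma iota_lea:
  assumes VS: "V \<subseteq> verts_f F"
  shows "orestrict (olea_set (iota F) (rk (verts_f F) ` V)) (iota F) = iota (lea_f V F)"
proof -
  let ?S = "verts_f F" let ?r = "rk (verts_f F)" let ?D = "dset V F"
  have fin: "finite ?S" by (rule verts_finite)
  have DS: "?D \<subseteq> ?S" by (rule dset_sub)
  have "orestrict (?r ` ?D) (iota F) = mkf ?D (parR ?D)"
    unfolding iota_mkf
    by (subst orestrict_mkf[OF fin DS]) (auto simp: restr_par_parR[OF DS] parR_def split: if_splits)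
  also have "\<dots> = mkf (verts_f (lea_f V F)) (parR (verts_f (lea_f V F)))"
  proof -
    obtain e where e: "emb e (verts_f (lea_f V F)) ?D" using lea_emb by blast
    show ?thesis
      by (rule mkf_iso[OF verts_finite(2)]) (use e in \<open>auto simp: emb_def parR_def split: if_splits\<close>)
  qed
  also have "\<dots> = iota (lea_f V F)" by (rule iota_mkf[symmetric])
  finally show ?thesis unfolding olea_iota[OF VS] .
qed

lemma ocop_iota: "ocop (iota F) = image_mset (map_prod iota iota) (pcop F)"
proof -
  let ?S = "verts_f F" let ?r = "rk (verts_f F)"
  have fin: "finite ?S" by (rule verts_finite)
  have inj: "inj_on ?r ?S" by (rule rk_inj[OF fin])
  have injI: "inj_on (\<lambda>V. ?r ` V) (padm_cuts F)"
  proof (rule inj_onI)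
    fix V1 V2 assume "V1 \<in> padm_cuts F" "V2 \<in> padm_cuts F" "?r ` V1 = ?r ` V2"
    then show "V1 = V2" using inj by (auto simp: padm_cuts_def inj_on_image_eq_iff)
  qed
  have "ocop (iota F) = image_mset
     (\<lambda>W. (orestrict ({1..fst (iota F)} - olea_set (iota F) W) (iota F), orestrict (olea_set (iota F) W) (iota F)))
     (image_mset (\<lambda>V. ?r ` V) (mset_set (padm_cuts F)))"
    unfolding ocop_def oadm_iota image_mset_mset_set[OF injI] ..
  also have "\<dots> = image_mset (\<lambda>V. (iota (roo_f V F), iota (lea_f V F))) (mset_set (padm_cuts F))"
    unfolding multiset.map_comp
  proof (rule image_mset_cong)
    fix V assume "V \<in># mset_set (padm_cuts F)"
    moreover have "finite (padm_cuts F)"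
      by (rule finite_subset[of _ "Pow ?S"]) (use fin in \<open>auto simp: padm_cuts_def\<close>)
    ultimately have "V \<in> padm_cuts F" by simp
    then have VS: "V \<subseteq> ?S" by (simp add: padm_cuts_def)
    show "((\<lambda>W. (orestrict ({1..fst (iota F)} - olea_set (iota F) W) (iota F), orestrict (olea_set (iota F) W) (iota F))) \<circ> (\<lambda>V. ?r ` V)) V
        = (iota (roo_f V F), iota (lea_f V F))"
      using iota_roo[OF VS] iota_lea[OF VS] by simp
  qed
  also have "\<dots> = image_mset (map_prod iota iota) (pcop F)"
    unfolding pcop_def multiset.map_comp by (simp add: comp_def)
  finally show ?thesis .
qed



lemma wf_iota: "wf_oforest (iota F)"
proof -
  let ?S = "verts_f F" let ?r = "rk (verts_f F)" let ?p = "snd (iota F)"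
  have fin: "finite ?S" by (rule verts_finite)
  have img: "?r ` ?S = {1..card ?S}" by (rule rk_image[OF fin])
  have pr: "parent_rel ?p = map_prod ?r ?r ` Rp F" by (rule parent_rel_iota)
  have c1: "\<forall>i. ?p i \<noteq> None \<longrightarrow> i \<in> {1..card ?S} \<and> the (?p i) \<in> {1..card ?S}"
  proof (intro allI impI)
    fix i assume "?p i \<noteq> None"
    then obtain j where j: "?p i = Some j" by blast
    then have "(j, i) \<in> parent_rel ?p" by (simp add: parent_rel_def)
    then have "(j, i) \<in> map_prod ?r ?r ` Rp F" using pr by simp
    then have "j \<in> ?r ` ?S \<and> i \<in> ?r ` ?S" using Rp_sub by auto
    then show "i \<in> {1..card ?S} \<and> the (?p i) \<in> {1..card ?S}" using img j by auto
  qed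
  have sub: "parent_rel ?p \<subseteq> less_than"
  proof
    fix q assume "q \<in> parent_rel ?p"
    then obtain x where x: "x \<in> ?S" "2 \<le> length x" "q = (?r (butlast x), ?r x)"
      using pr by (auto simp: Rp_def)
    have b: "butlast x \<in> ?S" using butlast_in_verts_f x by blast
    have "x \<noteq> []" using x by auto
    then have "x = butlast x @ [last x]" by simp
    then have "butlast x < x" using prefix_less[of "[last x]" "butlast x"] by simp
    then have "?r (butlast x) < ?r x" using rk_less[OF fin b x(1)] by simp
    then show "q \<in> less_than" using x by simp
  qed
  have "wf (parent_rel ?p)" by (rule wf_subset[OF wf_less_than sub])
  then show ?thesis using c1 by (subst iota_pair) (simp add: wf_oforest_def)
qed

definition good :: "nat option \<Rightarrow> nat \<Rightarrow> bool" where
  "good par off \<longleftrightarrow> par = None \<or> (\<exists>y. par = Some y \<and> y \<le> off)"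

lemma pre_entries:
  "\<forall>off par. pre_t off par t \<noteq> [] \<and> hd (pre_t off par t) = par \<and>
      (\<forall>k. 0 < k \<longrightarrow> k < length (pre_t off par t) \<longrightarrow> (\<exists>x. pre_t off par t ! k = Some x \<and> off < x))"
  "\<forall>off par. \<forall>k < length (pre_f off par F). pre_f off par F ! k = par \<or> (\<exists>x. pre_f off par F ! k = Some x \<and> off < x)"
proof (induction t and F rule: verts_t_verts_f.induct)
  case (1 cs)
  show ?case
  proof (intro allI conjI impI)
    fix off par k assume k: "0 < k" "k < length (pre_t off par (PNode cs))"
    then obtain k' where k': "k = Suc k'" by (cases k) auto
    let ?X = "pre_f (Suc off) (Some (Suc off)) cs"
    have h: "\<forall>k<length ?X. ?X ! k = Some (Suc off) \<or> (\<exists>x. ?X ! k = Some x \<and> Suc off < x)"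
      using 1 by blast
    have "k' < length ?X" using k k' by simp
    then have "?X ! k' = Some (Suc off) \<or> (\<exists>x. ?X ! k' = Some x \<and> Suc off < x)" using h by blast
    then show "\<exists>x. pre_t off par (PNode cs) ! k = Some x \<and> off < x"
      using k' by auto
  qed simp_all
next
  case 2 then show ?case by simp
next
  case (3 t ts)
  show ?case
  proof (intro allI impI)
    fix off par k assume k: "k < length (pre_f off par (t # ts))"
    let ?A = "pre_t off par t" let ?B = "pre_f (off + length ?A) par ts"
    show "pre_f off par (t # ts) ! k = par \<or> (\<exists>x. pre_f off par (t # ts) ! k = Some x \<and> off < x)"
    proof (cases "k < length ?A")
      case True
      show ?thesis
      proof (cases k)
        case 0
        then have "?A ! k = par" using 3 by (metis hd_conv_nth)
        then show ?thesis using True by (simp add: nth_append)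
      next
        case (Suc k')
        then show ?thesis using True 3 by (simp add: nth_append)
      qed
    next
      case False
      then have "k - length ?A < length ?B" using k by simp
      then have "?B ! (k - length ?A) = par \<or> (\<exists>x. ?B ! (k - length ?A) = Some x \<and> off + length ?A < x)"
        using 3 by blast
      then show ?thesis using False by (auto simp: nth_append)
    qed
  qed
qed

lemma pre_inj:
  "\<forall>t' off par A A'. good par off \<longrightarrow> (A = [] \<or> hd A = par) \<longrightarrow> (A' = [] \<or> hd A' = par) \<longrightarrow>
      pre_t off par t @ A = pre_t off par t' @ A' \<longrightarrow> t = t' \<and> A = A'"
  "\<forall>F' off par. good par off \<longrightarrow> pre_f off par F = pre_f off par F' \<longrightarrow> F = F'"
proof (induction t and F rule: verts_t_verts_f.induct)
  case (1 cs)
  show ?case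
  proof (intro allI impI)
    fix t' off par A A'
    assume g: "good par off" and hA: "A = [] \<or> hd A = par" and hA': "A' = [] \<or> hd A' = par"
      and eq: "pre_t off par (PNode cs) @ A = pre_t off par t' @ A'"
    obtain cs' where t': "t' = PNode cs'" by (cases t')
    let ?X = "pre_f (Suc off) (Some (Suc off)) cs" let ?X' = "pre_f (Suc off) (Some (Suc off)) cs'"
    have eq2: "?X @ A = ?X' @ A'" using eq t' by simp
    have allX: "\<forall>k < length ?X. \<exists>x. ?X ! k = Some x \<and> off < x"
      using pre_entries(2)[of cs] by fastforce
    have allX': "\<forall>k < length ?X'. \<exists>x. ?X' ! k = Some x \<and> off < x"
      using pre_entries(2)[of cs'] by fastforce
    have notpar: "\<not> (\<exists>x. par = Some x \<and> off < x)" using g by (auto simp: good_def)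
    have len: "length ?X = length ?X'"
    proof (rule ccontr)
      assume ne: "length ?X \<noteq> length ?X'"
      show False
      proof (cases "length ?X < length ?X'")
        case True
        then have "A \<noteq> []" using eq2 by (metis append_Nil2 append_eq_append_conv le_add1 length_append not_le)
        then have "(?X @ A) ! length ?X = par" using hA by (simp add: hd_conv_nth nth_append)
        moreover have "(?X' @ A') ! length ?X = ?X' ! length ?X" using True by (simp add: nth_append)
        ultimately show False using eq2 allX' True notpar by metis
      next
        case False
        then have lt: "length ?X' < length ?X" using ne by simp
        then have "A' \<noteq> []" using eq2 by (metis append_Nil2 append_eq_append_conv le_add1 length_append not_le)
        then have "(?X' @ A') ! length ?X' = par" using hA' by (simp add: hd_conv_nth nth_append)
        moreover have "(?X @ A) ! length ?X' = ?X ! length ?X'" using lt by (simp add: nth_append)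
        ultimately show False using eq2 allX lt notpar by metis
      qed
    qed
    then have "?X = ?X'" "A = A'" using eq2 by auto
    moreover have "good (Some (Suc off)) (Suc off)" by (simp add: good_def)
    ultimately have "cs = cs'" using 1 by blast
    then show "PNode cs = t' \<and> A = A'" using t' \<open>A = A'\<close> by simp
  qed
next
  case 2
  show ?case
  proof (intro allI impI)
    fix F' off par assume "pre_f off par [] = pre_f off par F'"
    then show "[] = F'"
      using pre_entries(1) by (cases F') auto
  qed
next
  case (3 t ts)
  show ?case
  proof (intro allI impI)
    fix F' off par assume g: "good par off" and eq: "pre_f off par (t # ts) = pre_f off par F'"
    obtain t' ts' where F': "F' = t' # ts'"
      using eq pre_entries(1) by (cases F') auto
    let ?B = "pre_f (off + length (pre_t off par t)) par ts"
    let ?B' = "pre_f (off + length (pre_t off par t')) par ts'"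
    have hB: "?B = [] \<or> hd ?B = par" by (cases ts) (auto simp: pre_entries(1))
    have hB': "?B' = [] \<or> hd ?B' = par" by (cases ts') (auto simp: pre_entries(1))
    have "pre_t off par t @ ?B = pre_t off par t' @ ?B'" using eq F' by simp
    then have tt: "t = t'" and BB: "?B = ?B'" using 3 g hB hB' by blast+
    have "good par (off + length (pre_t off par t))" using g by (auto simp: good_def)
    then have "ts = ts'" using 3 BB tt by blast
    then show "t # ts = F'" using F' tt by simp
  qed
qed

lemma inj_iota: "inj iota"
proof (rule injI)
  fix F G assume eq: "iota F = iota G"
  let ?L = "pre_f 0 None F" let ?M = "pre_f 0 None G"
  have len: "length ?L = length ?M" using eq unfolding iota_def Let_def by simp
  have "?L = ?M"
  proof (rule nth_equalityI[OF len])
    fix k assume k: "k < length ?L"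
    have "snd (iota F) (Suc k) = snd (iota G) (Suc k)" using eq by simp
    then show "?L ! k = ?M ! k" using k len unfolding iota_def Let_def by simp
  qed
  then show "F = G" using pre_inj(2) by (auto simp: good_def)
qed



lemma pre_shift:
  "\<forall>off par. pre_t (off + k) (map_option (\<lambda>a. a + k) par) t = map (map_option (\<lambda>a. a + k)) (pre_t off par t)"
  "\<forall>off par. pre_f (off + k) (map_option (\<lambda>a. a + k) par) F = map (map_option (\<lambda>a. a + k)) (pre_f off par F)"
proof (induction t and F rule: verts_t_verts_f.induct)
  case (1 cs)
  show ?case
  proof (intro allI)
    fix off par
    have "pre_f (Suc off + k) (map_option (\<lambda>a. a + k) (Some (Suc off))) cs =
        map (map_option (\<lambda>a. a + k)) (pre_f (Suc off) (Some (Suc off)) cs)" using 1 by blast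
    then show "pre_t (off + k) (map_option (\<lambda>a. a + k) par) (PNode cs) =
        map (map_option (\<lambda>a. a + k)) (pre_t off par (PNode cs))" by simp
  qed
next
  case 2 then show ?case by simp
next
  case (3 t ts)
  show ?case
  proof (intro allI)
    fix off par
    have a: "pre_t (off + k) (map_option (\<lambda>a. a + k) par) t = map (map_option (\<lambda>a. a + k)) (pre_t off par t)"
      using 3 by blast
    have b: "pre_f (off + length (pre_t off par t) + k) (map_option (\<lambda>a. a + k) par) ts =
        map (map_option (\<lambda>a. a + k)) (pre_f (off + length (pre_t off par t)) par ts)" using 3 by blast
    show "pre_f (off + k) (map_option (\<lambda>a. a + k) par) (t # ts) = map (map_option (\<lambda>a. a + k)) (pre_f off par (t # ts))"
      using a b by (simp add: ac_simps)
  qed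
qed

lemma pre_f_append: "pre_f off par (F @ G) = pre_f off par F @ pre_f (off + length (pre_f off par F)) par G"
  by (induction F arbitrary: off) (auto simp: ac_simps)

lemma iota_append: "iota (F @ G) = oprod (iota F) (iota G)"
proof -
  let ?L = "pre_f 0 None F" let ?M = "pre_f 0 None G"
  let ?n = "length ?L" let ?m = "length ?M"
  have sh: "pre_f ?n None G = map (map_option (\<lambda>a. a + ?n)) ?M"
    using pre_shift(2)[of ?n G] by (metis add_0 option.map_disc_iff)
  have p: "pre_f 0 None (F @ G) = ?L @ map (map_option (\<lambda>a. a + ?n)) ?M"
    using pre_f_append[of 0 None F G] sh by simp
  show ?thesis
    unfolding iota_def Let_def oprod_def p
    by (auto simp: fun_eq_iff nth_append split: if_splits)
qed

lemma iota_Nil: "iota [] = oempty"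
  by (auto simp: iota_def oempty_def fun_eq_iff)

lemma lin_ext_at: "inj g \<Longrightarrow> lin_ext g x (g d) = x d"
proof -
  assume inj: "inj g"
  have "{b \<in> fsupp x. g b = g d} = (if x d \<noteq> 0 then {d} else {})"
    using inj by (auto simp: fsupp_def dest: injD)
  then show ?thesis by (simp add: lin_ext_def)
qed

lemma lin_ext_out: "c \<notin> range g \<Longrightarrow> lin_ext g x c = 0"
proof -
  assume "c \<notin> range g"
  then have e: "{b \<in> fsupp x. g b = c} = {}" by auto
  have "lin_ext g x c = sum x {b \<in> fsupp x. g b = c}" by (simp add: lin_ext_def)
  also have "\<dots> = 0" unfolding e by simp
  finally show ?thesis .
qed

lemma fsupp_lin_ext: "inj g \<Longrightarrow> fsupp (lin_ext g x) = g ` fsupp x"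
proof (intro set_eqI iffI)
  fix c assume inj: "inj g" and c: "c \<in> fsupp (lin_ext g x)"
  then have "c \<in> range g" using lin_ext_out by (fastforce simp: fsupp_def)
  then obtain d where "c = g d" by blast
  then show "c \<in> g ` fsupp x" using c lin_ext_at[OF inj, of x d] by (auto simp: fsupp_def)
next
  fix c assume inj: "inj g" and "c \<in> g ` fsupp x"
  then obtain d where "c = g d" "x d \<noteq> 0" by (auto simp: fsupp_def)
  then show "c \<in> fsupp (lin_ext g x)" using lin_ext_at[OF inj, of x d] by (auto simp: fsupp_def)
qed

lemma count_image_mset_inj: "inj f \<Longrightarrow> count (image_mset f M) (f d) = count M d"
proof -
  assume inj: "inj f"
  have "f -` {f d} \<inter> set_mset M = {d} \<inter> set_mset M" using inj by (auto dest: injD)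
  then show ?thesis by (cases "d \<in># M") (auto simp: count_image_mset not_in_iff)
qed

lemma count_image_mset_out: "c \<notin> range f \<Longrightarrow> count (image_mset f M) c = 0"
  by (auto simp: count_image_mset)

lemma inj_map_prod_iota: "inj (map_prod iota iota)"
  using map_prod_inj_on[OF inj_iota inj_iota] by simp

lemma mult_hom:
  fixes x y :: "pforest \<Rightarrow> 'k::field"
  shows "lin_ext iota (bilin_ext (@) x y) = bilin_ext oprod (lin_ext iota x) (lin_ext iota y)"
proof (rule ext)
  fix c
  let ?Q = "{(a, b). a \<in> fsupp x \<and> b \<in> fsupp y \<and> iota (a @ b) = c}"
  have inj2: "inj_on (map_prod iota iota) ?Q" using inj_map_prod_iota by (rule inj_on_subset) simp
  have set: "{(a, b). a \<in> fsupp (lin_ext iota x) \<and> b \<in> fsupp (lin_ext iota y) \<and> oprod a b = c}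
      = map_prod iota iota ` ?Q"
    unfolding fsupp_lin_ext[OF inj_iota] by (auto simp: iota_append)
  have rhs: "bilin_ext oprod (lin_ext iota x) (lin_ext iota y) c = (\<Sum>(a, b)\<in>?Q. x a * y b)"
    unfolding bilin_ext_def set sum.reindex[OF inj2]
    by (rule sum.cong) (auto simp: lin_ext_at[OF inj_iota])
  show "lin_ext iota (bilin_ext (@) x y) c = bilin_ext oprod (lin_ext iota x) (lin_ext iota y) c"
  proof (cases "c \<in> range iota")
    case True
    then obtain d where d: "c = iota d" by blast
    have Qe: "?Q = {(a, b). a \<in> fsupp x \<and> b \<in> fsupp y \<and> a @ b = d}"
      using inj_iota d by (auto dest: injD)
    have "lin_ext iota (bilin_ext (@) x y) c = bilin_ext (@) x y d" using d lin_ext_at[OF inj_iota] by simp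
    also have "\<dots> = (\<Sum>(a, b)\<in>?Q. x a * y b)" unfolding Qe by (simp add: bilin_ext_def)
    finally show ?thesis using rhs by simp
  next
    case False
    then have Qe: "?Q = {}" by auto
    have "lin_ext iota (bilin_ext (@) x y) c = 0" by (rule lin_ext_out[OF False])
    also have "\<dots> = (\<Sum>(a, b)\<in>?Q. x a * y b)" unfolding Qe by simp
    finally show ?thesis using rhs by simp
  qed
qed

lemma cop_hom:
  fixes x :: "pforest \<Rightarrow> 'k::field"
  shows "cop_ext ocop (lin_ext iota x) = lin_ext (map_prod iota iota) (cop_ext pcop x)"
proof (rule ext)
  fix pq :: "oforest \<times> oforest"
  have "cop_ext ocop (lin_ext iota x) pq = (\<Sum>b\<in>fsupp x. x b * of_nat (count (ocop (iota b)) pq))"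
    unfolding cop_ext_def fsupp_lin_ext[OF inj_iota] sum.reindex[OF inj_on_subset[OF inj_iota subset_UNIV]]
    by (simp add: lin_ext_at[OF inj_iota])
  also have "\<dots> = (\<Sum>b\<in>fsupp x. x b * of_nat (count (image_mset (map_prod iota iota) (pcop b)) pq))"
    by (simp add: ocop_iota)
  also have "\<dots> = lin_ext (map_prod iota iota) (cop_ext pcop x) pq"
  proof (cases "pq \<in> range (map_prod iota iota)")
    case True
    then obtain ab where ab: "pq = map_prod iota iota ab" by (metis rangeE)
    show ?thesis unfolding ab lin_ext_at[OF inj_map_prod_iota] count_image_mset_inj[OF inj_map_prod_iota]
      by (simp add: cop_ext_def)
  next
    case False
    then show ?thesis by (simp add: lin_ext_out count_image_mset_out)
  qed
  finally show "cop_ext ocop (lin_ext iota x) pq = lin_ext (map_prod iota iota) (cop_ext pcop x) pq" .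
qed

theorem mainTheorem5:
  shows "(\<forall>x \<in> (H_NCK :: (pforest \<Rightarrow> 'k::field) set). iota_lin x \<in> H_o)
    \<and> inj_on (iota_lin :: (pforest \<Rightarrow> 'k::field) \<Rightarrow> _) H_NCK
    \<and> (\<forall>x \<in> (H_NCK :: (pforest \<Rightarrow> 'k::field) set). \<forall>y \<in> H_NCK.
          iota_lin (mult_NCK x y) = mult_o (iota_lin x) (iota_lin y))
    \<and> iota_lin (unit_NCK :: pforest \<Rightarrow> 'k::field) = unit_o
    \<and> (\<forall>x \<in> (H_NCK :: (pforest \<Rightarrow> 'k::field) set).
          cop_o (iota_lin x) = iota_tensor (cop_NCK x))
    \<and> (\<forall>x \<in> (H_NCK :: (pforest \<Rightarrow> 'k::field) set).
          counit_o (iota_lin x) = counit_NCK x)"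
proof (intro conjI ballI)
  fix x :: "pforest \<Rightarrow> 'k::field" assume x: "x \<in> H_NCK"
  have "finite (fsupp (iota_lin x))"
    using x unfolding iota_lin_def H_NCK_def free_mod_def fsupp_lin_ext[OF inj_iota] by simp
  moreover have "\<forall>F\<in>fsupp (iota_lin x). wf_oforest F"
    unfolding iota_lin_def fsupp_lin_ext[OF inj_iota] using wf_iota by blast
  ultimately show "iota_lin x \<in> H_o" by (simp add: H_o_def free_mod_def)
next
  show "inj_on (iota_lin :: (pforest \<Rightarrow> 'k::field) \<Rightarrow> _) H_NCK"
  proof (rule inj_onI)
    fix x y :: "pforest \<Rightarrow> 'k" assume "iota_lin x = iota_lin y"
    then have "\<And>d. lin_ext iota x (iota d) = lin_ext iota y (iota d)" by (simp add: iota_lin_def)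
    then show "x = y" unfolding lin_ext_at[OF inj_iota] by (rule ext)
  qed
next
  fix x y :: "pforest \<Rightarrow> 'k::field"
  show "iota_lin (mult_NCK x y) = mult_o (iota_lin x) (iota_lin y)"
    unfolding iota_lin_def mult_NCK_def mult_o_def by (rule mult_hom)
next
  show "iota_lin (unit_NCK :: pforest \<Rightarrow> 'k::field) = unit_o"
  proof (rule ext)
    fix c
    show "iota_lin (unit_NCK :: pforest \<Rightarrow> 'k::field) c = unit_o c"
    proof (cases "c \<in> range iota")
      case True
      then obtain d where d: "c = iota d" by blast
      have "iota d = oempty \<longleftrightarrow> d = []" using inj_iota iota_Nil by (metis injD)
      then show ?thesis unfolding d iota_lin_def lin_ext_at[OF inj_iota] unit_NCK_def unit_o_def basis_vec_def
        by simp
    next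
      case False
      then have "c \<noteq> oempty" using iota_Nil by (metis rangeI)
      then show ?thesis using False unfolding iota_lin_def unit_o_def basis_vec_def by (simp add: lin_ext_out)
    qed
  qed
next
  fix x :: "pforest \<Rightarrow> 'k::field"
  show "cop_o (iota_lin x) = iota_tensor (cop_NCK x)"
    unfolding cop_o_def iota_lin_def iota_tensor_def cop_NCK_def by (rule cop_hom)
next
  fix x :: "pforest \<Rightarrow> 'k::field"
  show "counit_o (iota_lin x) = counit_NCK x"
    unfolding counit_o_def counit_NCK_def iota_lin_def iota_Nil[symmetric] lin_ext_at[OF inj_iota] ..
qed


end
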